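(* Let $X$ and $Y$ be real Banach spaces such that $(\mathcal F(X),Y)$ has the Bishop-Phelps-Bollob\'as property for compact operators witnessed by a function $\varepsilon\mapsto\eta(\varepsilon)$. Let $0<\varepsilon<1$, $f\in\mathrm{Lip}_{0\mathcal K}(X,Y)$ with $\|f\|=1$, and $(x,y)\in\widetilde X$ with $\frac{\|f(x)-f(y)\|}{\|x-y\|}>1-\eta(\varepsilon)$. Then for every $h\in\mathrm{Lip}_0(X,Y)$ with $\|h\|=1$ and $\frac{\|h(x)-h(y)\|}{\|x-y\|}=1$, there exist $g\in\mathrm{Lip}_{0\mathcal K}(X,Y)$ with $\|g\|=1$, $z\in S_Y$ and a sequence $(v_n,w_n)\in\widetilde X$ such that $\|g-f\|<\varepsilon$, $\frac{\|h(v_n)-h(w_n)\|}{\|v_n-w_n\|}>1-\varepsilon$ for every $n$, and $\frac{g(v_n)-g(w_n)}{\|v_n-w_n\|}\to z$.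
   Context: $\widetilde X=\{(x,y)\in X^2:x\neq y\}$. $\mathrm{Lip}_0(X,Y)$ is the Banach space of Lipschitz $f\colon X\to Y$ with $f(0)=0$ and norm $\|f\|=\sup_{(x,y)\in\widetilde X}\|f(x)-f(y)\|/\|x-y\|$; $\mathrm{Lip}_{0\mathcal K}(X,Y)$ is the subspace of those $f$ whose set of slopes $\{\frac{f(x)-f(y)}{\|x-y\|}:(x,y)\in\widetilde X\}$ is relatively compact. $\mathcal F(X)$ is the closed span of $\{\delta_x:x\in X\}$ in $\mathrm{Lip}_0(X,\mathbb R)^*$, $\delta_x(g)=g(x)$. A pair $(Z,Y)$ has the BPBp for compact operators witnessed by a function $\eta\colon(0,1)\to(0,\infty)$ if for every $\varepsilon\in(0,1)$, whenever $T\colon Z\to Y$ is compact linear with $\|T\|=1$ and $w\in S_Z$ satisfies $\|Tw\|>1-\eta(\varepsilon)$, there exist compact linear $S\colon Z\to Y$ with $\|S\|=1$ and $v\in S_Z$ with $\|Sv\|=1$, $\|S-T\|<\varepsilon$, $\|v-w\|<\varepsilon$. *)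

theory Defs
  imports "HOL-Analysis.Analysis"
begin

definition offdiag :: "('a \<times> 'a) set" where
  "offdiag = {(x, y). x \<noteq> y}"

definition lip0 :: "('a::real_normed_vector \<Rightarrow> 'c::real_normed_vector) set" where
  "lip0 = {f. f 0 = 0 \<and> (\<exists>C. C-lipschitz_on UNIV f)}"

definition lipnorm :: "('a::real_normed_vector \<Rightarrow> 'c::real_normed_vector) \<Rightarrow> real" where
  "lipnorm f = (SUP p \<in> offdiag. norm (f (fst p) - f (snd p)) / norm (fst p - snd p))"

definition slopes :: "('a::real_normed_vector \<Rightarrow> 'c::real_normed_vector) \<Rightarrow> 'c set" where
  "slopes f = {(f x - f y) /\<^sub>R norm (x - y) | x y. x \<noteq> y}"

definition lip0K :: "('a::real_normed_vector \<Rightarrow> 'c::real_normed_vector) set" where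
  "lip0K = {f \<in> lip0. compact (closure (slopes f))}"

text \<open>Elements of the dual Lip_0(X,R)^*, represented as functionals on 'a \<Rightarrow> real
  which vanish outside Lip_0(X,R); dual norm.\<close>
definition dnorm :: "(('a::real_normed_vector \<Rightarrow> real) \<Rightarrow> real) \<Rightarrow> real" where
  "dnorm \<phi> = (SUP g \<in> {g \<in> lip0. lipnorm g \<le> 1}. \<bar>\<phi> g\<bar>)"

definition delta_span :: "(('a::real_normed_vector \<Rightarrow> real) \<Rightarrow> real) set" where
  "delta_span = {\<lambda>g. if g \<in> lip0 then (\<Sum>x\<in>A. c x * g x) else 0 | A c. finite A}"

text \<open>The Lipschitz-free space F(X): bounded linear functionals on Lip_0(X,R)
  (vanishing outside Lip_0(X,R)) in the norm closure of the span of the deltas.\<close>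
definition freesp :: "(('a::real_normed_vector \<Rightarrow> real) \<Rightarrow> real) set" where
  "freesp = {\<phi>. (\<forall>g. g \<notin> lip0 \<longrightarrow> \<phi> g = 0)
     \<and> (\<forall>g\<in>lip0. \<forall>g'\<in>lip0. \<forall>a b. \<phi> (\<lambda>t. a * g t + b * g' t) = a * \<phi> g + b * \<phi> g')
     \<and> (\<exists>C. \<forall>g\<in>lip0. \<bar>\<phi> g\<bar> \<le> C * lipnorm g)
     \<and> (\<forall>e>0. \<exists>\<psi>\<in>delta_span. dnorm (\<lambda>g. \<phi> g - \<psi> g) < e)}"

text \<open>Compact linear operators F(X) \<rightarrow> Y (only their values on F(X) matter).\<close>
definition compact_op_free ::
  "((('a::real_normed_vector \<Rightarrow> real) \<Rightarrow> real) \<Rightarrow> 'b::real_normed_vector) \<Rightarrow> bool" where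
  "compact_op_free T \<longleftrightarrow>
     (\<forall>\<phi>\<in>freesp. \<forall>\<psi>\<in>freesp. \<forall>a b. T (\<lambda>g. a * \<phi> g + b * \<psi> g) = a *\<^sub>R T \<phi> + b *\<^sub>R T \<psi>)
     \<and> compact (closure (T ` {\<phi> \<in> freesp. dnorm \<phi> \<le> 1}))"

definition opnorm_free ::
  "((('a::real_normed_vector \<Rightarrow> real) \<Rightarrow> real) \<Rightarrow> 'b::real_normed_vector) \<Rightarrow> real" where
  "opnorm_free T = (SUP \<phi> \<in> {\<phi> \<in> freesp. dnorm \<phi> \<le> 1}. norm (T \<phi>))"

definition bpbp_compact_free ::
  "'a::real_normed_vector itself \<Rightarrow> 'b::real_normed_vector itself \<Rightarrow> (real \<Rightarrow> real) \<Rightarrow> bool" where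
  "bpbp_compact_free TYPE('a) TYPE('b) eta \<longleftrightarrow>
     (\<forall>\<epsilon>. 0 < \<epsilon> \<and> \<epsilon> < 1 \<longrightarrow> 0 < eta \<epsilon>) \<and>
     (\<forall>\<epsilon>. 0 < \<epsilon> \<and> \<epsilon> < 1 \<longrightarrow>
       (\<forall>(T :: (('a \<Rightarrow> real) \<Rightarrow> real) \<Rightarrow> 'b) w.
          compact_op_free T \<and> opnorm_free T = 1 \<and> w \<in> freesp \<and> dnorm w = 1
          \<and> norm (T w) > 1 - eta \<epsilon> \<longrightarrow>
          (\<exists>(S :: (('a \<Rightarrow> real) \<Rightarrow> real) \<Rightarrow> 'b) v.
             compact_op_free S \<and> opnorm_free S = 1 \<and> v \<in> freesp \<and> dnorm v = 1
             \<and> norm (S v) = 1 \<and> opnorm_free (\<lambda>\<phi>. S \<phi> - T \<phi>) < \<epsilon>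
             \<and> dnorm (\<lambda>g. v g - w g) < \<epsilon>)))"

end

theory Submission
  imports Defs
begin

definition hb_ok :: "('b::real_vector \<Rightarrow> real) \<Rightarrow> 'b \<Rightarrow> ('b \<times> real) set \<Rightarrow> bool" where
  "hb_ok p u G \<longleftrightarrow> (u, p u) \<in> G \<and> (\<forall>y a. (y,a)\<in>G \<longrightarrow> a \<le> p y)
     \<and> (\<forall>y1 a1 y2 a2. (y1,a1)\<in>G \<longrightarrow> (y2,a2)\<in>G \<longrightarrow> (y1+y2, a1+a2) \<in> G)
     \<and> (\<forall>y a c. (y,a) \<in> G \<longrightarrow> (c *\<^sub>R y, c*a) \<in> G)"

locale sublin =
  fixes p :: "'b::real_vector \<Rightarrow> real"
  assumes padd: "\<And>x y. p (x + y) \<le> p x + p y"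
      and phom: "\<And>c x. c \<ge> 0 \<Longrightarrow> p (c *\<^sub>R x) = c * p x"
begin

lemma p0: "p 0 = 0"
  using phom[of 0 0] by simp

lemma pneg: "- p x \<le> p (- x)"
  using padd[of x "-x"] p0 by simp

lemma hb_fun:
  assumes "hb_ok p u G" "(y,a)\<in>G" "(y,b)\<in>G" shows "a = b"
proof -
  have "(y + (-1) *\<^sub>R y, a + (-1)*b) \<in> G" using assms unfolding hb_ok_def by blast
  hence "a - b \<le> 0" using assms(1) p0 unfolding hb_ok_def by fastforce
  moreover have "(y + (-1) *\<^sub>R y, b + (-1)*a) \<in> G" using assms unfolding hb_ok_def by blast
  hence "b - a \<le> 0" using assms(1) p0 unfolding hb_ok_def by fastforce
  ultimately show ?thesis by simp
qed

lemma hb_init: "hb_ok p u {(c *\<^sub>R u, c * p u) | c. True}"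
  unfolding hb_ok_def
proof (intro conjI allI impI)
  show "(u, p u) \<in> {(c *\<^sub>R u, c * p u) |c. True}" by (rule CollectI, rule exI[of _ 1]) simp
next
  fix y a assume "(y, a) \<in> {(c *\<^sub>R u, c * p u) |c. True}"
  then obtain c where c: "y = c *\<^sub>R u" "a = c * p u" by auto
  show "a \<le> p y"
  proof (cases "c \<ge> 0")
    case True then show ?thesis using c phom by simp
  next
    case False
    have e: "(-c) *\<^sub>R (-u) = y" using c by simp
    have "p y = p ((-c) *\<^sub>R (-u))" by (simp only: e)
    also have "\<dots> = (-c) * p (-u)" by (rule phom) (use False in linarith)
    finally have "p y = (-c) * p (-u)" .
    moreover have "(-c) * (- p u) \<le> (-c) * p (-u)" using pneg[of u] False
      by (intro mult_left_mono) auto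
    ultimately show ?thesis using c by simp
  qed
next
  fix y1 a1 y2 a2 assume "(y1, a1) \<in> {(c *\<^sub>R u, c * p u) |c. True}" "(y2, a2) \<in> {(c *\<^sub>R u, c * p u) |c. True}"
  then obtain c1 c2 where "y1 = c1 *\<^sub>R u" "a1 = c1 * p u" "y2 = c2 *\<^sub>R u" "a2 = c2 * p u" by auto
  then show "(y1 + y2, a1 + a2) \<in> {(c *\<^sub>R u, c * p u) |c. True}"
    by (intro CollectI exI[of _ "c1+c2"]) (simp add: scaleR_add_left distrib_right)
next
  fix y a c assume "(y, a) \<in> {(c *\<^sub>R u, c * p u) |c. True}"
  then obtain d where "y = d *\<^sub>R u" "a = d * p u" by auto
  then show "(c *\<^sub>R y, c * a) \<in> {(c *\<^sub>R u, c * p u) |c. True}"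
    by (intro CollectI exI[of _ "c*d"]) simp
qed

lemma hb_chain:
  assumes "C \<noteq> {}" "subset.chain {G. hb_ok p u G} C"
  shows "hb_ok p u (\<Union>C)"
proof -
  have ok: "\<And>G. G \<in> C \<Longrightarrow> hb_ok p u G" using assms(2) unfolding subset.chain_def by auto
  have ch: "\<And>G H. G \<in> C \<Longrightarrow> H \<in> C \<Longrightarrow> G \<subseteq> H \<or> H \<subseteq> G" using assms(2) unfolding subset.chain_def by auto
  obtain G0 where "G0 \<in> C" using assms(1) by auto
  show ?thesis unfolding hb_ok_def
  proof (intro conjI allI impI)
    show "(u, p u) \<in> \<Union> C" using ok[OF \<open>G0 \<in> C\<close>] \<open>G0 \<in> C\<close> unfolding hb_ok_def by blast
  next
    fix y a assume "(y, a) \<in> \<Union> C" then show "a \<le> p y" using ok unfolding hb_ok_def by blast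
  next
    fix y1 a1 y2 a2 assume 1: "(y1, a1) \<in> \<Union> C" and 2: "(y2, a2) \<in> \<Union> C"
    then obtain G1 G2 where g: "G1 \<in> C" "G2 \<in> C" "(y1,a1) \<in> G1" "(y2,a2)\<in>G2" by auto
    show "(y1 + y2, a1 + a2) \<in> \<Union> C"
    proof (cases "G1 \<subseteq> G2")
      case True then show ?thesis using ok[OF g(2)] g unfolding hb_ok_def by blast
    next
      case False then have "G2 \<subseteq> G1" using ch g by blast
      then show ?thesis using ok[OF g(1)] g unfolding hb_ok_def by blast
    qed
  next
    fix y a c assume "(y, a) \<in> \<Union> C" then show "(c *\<^sub>R y, c * a) \<in> \<Union> C"
      using ok unfolding hb_ok_def by blast
  qed
qed

lemma hb_extend:
  assumes ok: "hb_ok p u G" and e: "e \<notin> fst ` G"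
  shows "\<exists>G'. hb_ok p u G' \<and> G \<subseteq> G' \<and> G' \<noteq> G"
proof -
  have key: "a1 - p (y1 - e) \<le> p (y2 + e) - a2" if "(y1,a1)\<in>G" "(y2,a2)\<in>G" for y1 a1 y2 a2
  proof -
    have "(y1+y2, a1+a2) \<in> G" using ok that unfolding hb_ok_def by blast
    hence "a1 + a2 \<le> p (y1 + y2)" using ok unfolding hb_ok_def by blast
    also have "\<dots> \<le> p (y1 - e) + p (y2 + e)" using padd[of "y1 - e" "y2 + e"] by simp
    finally show ?thesis by simp
  qed
  define L where "L = {a - p (y - e) | y a. (y,a) \<in> G}"
  define c where "c = Sup L"
  have uG: "(u, p u) \<in> G" using ok unfolding hb_ok_def by blast
  have Lne: "L \<noteq> {}" using uG unfolding L_def by blast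
  have Lbdd: "bdd_above L" unfolding L_def bdd_above_def using key uG by blast
  have c1: "a - p (y - e) \<le> c" if "(y,a)\<in>G" for y a
    unfolding c_def using that Lbdd by (intro cSup_upper) (auto simp: L_def)
  have c2: "c \<le> p (y + e) - a" if "(y,a)\<in>G" for y a
    unfolding c_def using that Lne key by (intro cSup_least) (auto simp: L_def)
  define G' where "G' = {(y + t *\<^sub>R e, a + t * c) | y a t. (y,a) \<in> G}"
  have GG': "G \<subseteq> G'" unfolding G'_def by force
  have "(0, 0) \<in> G" using ok uG unfolding hb_ok_def by (metis mult_zero_left scale_zero_left)
  hence "(e, c) \<in> G'" unfolding G'_def by (intro CollectI exI[of _ 0] exI[of _ 0] exI[of _ 1]) simp
  hence neq: "G' \<noteq> G" using e by force
  have okG': "hb_ok p u G'" unfolding hb_ok_def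
  proof (intro conjI allI impI)
    show "(u, p u) \<in> G'" using GG' uG by blast
  next
    fix y a assume "(y, a) \<in> G'"
    then obtain y0 a0 t where yt: "y = y0 + t *\<^sub>R e" "a = a0 + t * c" "(y0,a0) \<in> G" unfolding G'_def by blast
    show "a \<le> p y"
    proof (cases "t = 0")
      case True then show ?thesis using yt ok unfolding hb_ok_def by auto
    next
      case False
      show ?thesis
      proof (cases "t > 0")
        case True
        have "((1/t) *\<^sub>R y0, (1/t) * a0) \<in> G" using ok yt unfolding hb_ok_def by blast
        from c2[OF this] have "c \<le> p ((1/t) *\<^sub>R y0 + e) - (1/t) * a0" .
        hence "t * c \<le> t * p ((1/t) *\<^sub>R y0 + e) - a0" using True
          by (simp add: field_simps mult_left_mono)
        also have "t * p ((1/t) *\<^sub>R y0 + e) = p (t *\<^sub>R ((1/t) *\<^sub>R y0 + e))" using phom True by simp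
        also have "t *\<^sub>R ((1/t) *\<^sub>R y0 + e) = y" using yt True by (simp add: scaleR_add_right)
        finally show ?thesis using yt by simp
      next
        case False
        hence tn: "t < 0" using \<open>t \<noteq> 0\<close> by simp
        define s where "s = -t"
        have s: "s > 0" using tn s_def by simp
        have "((1/s) *\<^sub>R y0, (1/s) * a0) \<in> G" using ok yt unfolding hb_ok_def by blast
        from c1[OF this] have "(1/s) * a0 - p ((1/s) *\<^sub>R y0 - e) \<le> c" .
        hence "a0 - s * p ((1/s) *\<^sub>R y0 - e) \<le> s * c" using s
          by (simp add: field_simps)
        also have "s * p ((1/s) *\<^sub>R y0 - e) = p (s *\<^sub>R ((1/s) *\<^sub>R y0 - e))" using phom s by simp
        also have "s *\<^sub>R ((1/s) *\<^sub>R y0 - e) = y" using yt s by (simp add: scaleR_diff_right s_def)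
        finally show ?thesis using yt s_def by simp
      qed
    qed
  next
    fix y1 a1 y2 a2 assume "(y1, a1) \<in> G'" "(y2, a2) \<in> G'"
    then obtain z1 b1 t1 z2 b2 t2 where h: "y1 = z1 + t1 *\<^sub>R e" "a1 = b1 + t1 * c" "(z1,b1) \<in> G"
       "y2 = z2 + t2 *\<^sub>R e" "a2 = b2 + t2 * c" "(z2,b2) \<in> G" unfolding G'_def by blast
    have "(z1+z2, b1+b2) \<in> G" using ok h unfolding hb_ok_def by blast
    then show "(y1 + y2, a1 + a2) \<in> G'" unfolding G'_def using h
      by (intro CollectI exI[of _ "z1+z2"] exI[of _ "b1+b2"] exI[of _ "t1+t2"])
         (simp add: algebra_simps)
  next
    fix y a d assume "(y, a) \<in> G'"
    then obtain z b t where h: "y = z + t *\<^sub>R e" "a = b + t * c" "(z,b) \<in> G" unfolding G'_def by blast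
    have "(d *\<^sub>R z, d * b) \<in> G" using ok h unfolding hb_ok_def by blast
    then show "(d *\<^sub>R y, d * a) \<in> G'" unfolding G'_def using h
      by (intro CollectI exI[of _ "d *\<^sub>R z"] exI[of _ "d*b"] exI[of _ "d*t"])
         (simp add: algebra_simps)
  qed
  show ?thesis using okG' GG' neq by blast
qed

lemma hahn_banach:
  "\<exists>l. linear l \<and> (\<forall>x. l x \<le> p x) \<and> l u = p u"
proof -
  have "\<exists>M\<in>{G. hb_ok p u G}. \<forall>X\<in>{G. hb_ok p u G}. M \<subseteq> X \<longrightarrow> X = M"
    using hb_init by (intro subset_Zorn_nonempty) (auto intro: hb_chain)
  then obtain M where okM: "hb_ok p u M" and maxM: "\<And>X. hb_ok p u X \<Longrightarrow> M \<subseteq> X \<Longrightarrow> X = M" by blast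
  have dom: "\<exists>a. (y,a) \<in> M" for y
  proof (rule ccontr)
    assume "\<not> (\<exists>a. (y,a) \<in> M)"
    hence "y \<notin> fst ` M" by force
    from hb_extend[OF okM this] maxM show False by blast
  qed
  define l where "l y = (SOME a. (y,a) \<in> M)" for y
  have lM: "(y, l y) \<in> M" for y unfolding l_def using dom by (metis someI_ex)
  have lv: "(y,a) \<in> M \<Longrightarrow> l y = a" for y a using hb_fun[OF okM lM] by blast
  have "linear l"
  proof (rule linearI)
    fix x y show "l (x + y) = l x + l y" using okM lM lv unfolding hb_ok_def by blast
  next
    fix c x show "l (c *\<^sub>R x) = c *\<^sub>R l x" using okM lM lv unfolding hb_ok_def by force
  qed
  moreover have "\<forall>x. l x \<le> p x" using okM lM unfolding hb_ok_def by blast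
  moreover have "l u = p u" using okM lv unfolding hb_ok_def by blast
  ultimately show ?thesis by blast
qed

end

lemma hb_norming:
  fixes u :: "'b::real_normed_vector"
  shows "\<exists>l. linear l \<and> (\<forall>x. \<bar>l x\<bar> \<le> norm x) \<and> l u = norm u"
proof -
  interpret sublin norm by unfold_locales (auto simp: norm_triangle_ineq)
  obtain l where l: "linear l" "\<forall>x. l x \<le> norm x" "l u = norm u" using hahn_banach by blast
  have "\<bar>l x\<bar> \<le> norm x" for x
    using l(2)[rule_format, of x] l(2)[rule_format, of "-x"] linear_neg[OF l(1), of x] by auto
  with l show ?thesis by blast
qed

lemma lip0_iff: "F \<in> lip0 \<longleftrightarrow> F 0 = 0 \<and> (\<exists>C. C-lipschitz_on UNIV F)"
  unfolding lip0_def by simp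

lemma lip0_bound:
  assumes "F \<in> lip0" obtains C where "C \<ge> 0" "\<And>p q. norm (F p - F q) \<le> C * norm (p - q)"
  using assms unfolding lip0_def lipschitz_on_def by (auto simp: dist_norm)

lemma lip0I:
  fixes F :: "'a::real_normed_vector \<Rightarrow> 'b::real_normed_vector"
  assumes "F 0 = 0" "\<And>p q. norm (F p - F q) \<le> C * norm (p - q)"
  shows "F \<in> lip0"
proof -
  have "(max C 0)-lipschitz_on UNIV F" unfolding lipschitz_on_def dist_norm
  proof (intro conjI ballI)
    fix p q :: 'a
    have "C * norm (p - q) \<le> max C 0 * norm (p - q)" by (intro mult_right_mono) auto
    then show "norm (F p - F q) \<le> max C 0 * norm (p - q)" using assms(2)[of p q] by linarith
  qed simp
  then show ?thesis using assms(1) unfolding lip0_def by blast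
qed

lemma lip0_comb:
  assumes "F \<in> lip0" "G \<in> lip0"
  shows "(\<lambda>t. a *\<^sub>R F t + b *\<^sub>R G t) \<in> lip0"
proof -
  obtain C1 where C1: "C1 \<ge> 0" "\<And>p q. norm (F p - F q) \<le> C1 * norm (p - q)" using lip0_bound[OF assms(1)] by blast
  obtain C2 where C2: "C2 \<ge> 0" "\<And>p q. norm (G p - G q) \<le> C2 * norm (p - q)" using lip0_bound[OF assms(2)] by blast
  have F0: "F 0 = 0" and G0: "G 0 = 0" using assms unfolding lip0_def by auto
  show ?thesis
  proof (rule lip0I[where C = "\<bar>a\<bar> * C1 + \<bar>b\<bar> * C2"])
    show "a *\<^sub>R F 0 + b *\<^sub>R G 0 = 0" using F0 G0 by simp
  next
    fix p q
    have "norm ((a *\<^sub>R F p + b *\<^sub>R G p) - (a *\<^sub>R F q + b *\<^sub>R G q)) = norm (a *\<^sub>R (F p - F q) + b *\<^sub>R (G p - G q))"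
      by (simp add: algebra_simps)
    also have "\<dots> \<le> \<bar>a\<bar> * norm (F p - F q) + \<bar>b\<bar> * norm (G p - G q)"
      by (metis norm_scaleR norm_triangle_ineq)
    also have "\<dots> \<le> \<bar>a\<bar> * (C1 * norm (p - q)) + \<bar>b\<bar> * (C2 * norm (p - q))"
      by (intro add_mono mult_left_mono C1 C2) auto
    finally show "norm ((a *\<^sub>R F p + b *\<^sub>R G p) - (a *\<^sub>R F q + b *\<^sub>R G q)) \<le> (\<bar>a\<bar> * C1 + \<bar>b\<bar> * C2) * norm (p - q)"
      by (simp add: algebra_simps)
  qed
qed

lemma lip0_comb_real:
  fixes g g' :: "'a::real_normed_vector \<Rightarrow> real"
  assumes "g \<in> lip0" "g' \<in> lip0"
  shows "(\<lambda>t. a * g t + b * g' t) \<in> lip0"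
  using lip0_comb[OF assms, of a b] by simp

lemma lipnorm_bdd:
  assumes "F \<in> lip0"
  shows "bdd_above ((\<lambda>p. norm (F (fst p) - F (snd p)) / norm (fst p - snd p)) ` offdiag)"
proof -
  obtain C where C: "C \<ge> 0" "\<And>p q. norm (F p - F q) \<le> C * norm (p - q)" using lip0_bound[OF assms] by blast
  have "norm (F (fst p) - F (snd p)) / norm (fst p - snd p) \<le> C" if "p \<in> offdiag" for p
  proof -
    have "norm (fst p - snd p) > 0" using that unfolding offdiag_def by auto
    then show ?thesis using C(2)[of "fst p" "snd p"] by (simp add: divide_le_eq)
  qed
  then show ?thesis by (intro bdd_aboveI2) auto
qed

lemma lipnorm_ge:
  assumes "F \<in> lip0" "p \<noteq> q"
  shows "norm (F p - F q) / norm (p - q) \<le> lipnorm F"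
  unfolding lipnorm_def using assms
  by (intro cSUP_upper2[OF lipnorm_bdd[OF assms(1)], of "(p,q)"]) (auto simp: offdiag_def)

lemma lip_ineq:
  assumes "F \<in> lip0"
  shows "norm (F p - F q) \<le> lipnorm F * norm (p - q)"
proof (cases "p = q")
  case True then show ?thesis by simp
next
  case False
  then have "norm (p - q) > 0" by simp
  with lipnorm_ge[OF assms False] show ?thesis by (simp add: divide_le_eq)
qed

definition ubdd :: "(('a::real_normed_vector \<Rightarrow> real) \<Rightarrow> real) \<Rightarrow> bool" where
  "ubdd \<phi> \<longleftrightarrow> (\<exists>C. \<forall>k\<in>lip0. lipnorm k \<le> 1 \<longrightarrow> \<bar>\<phi> k\<bar> \<le> C)"

definition flin :: "(('a::real_normed_vector \<Rightarrow> real) \<Rightarrow> real) \<Rightarrow> bool" where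
  "flin \<phi> \<longleftrightarrow> (\<forall>g\<in>lip0. \<forall>g'\<in>lip0. \<forall>a b. \<phi> (\<lambda>t. a * g t + b * g' t) = a * \<phi> g + b * \<phi> g')"

definition dfun :: "'a set \<Rightarrow> ('a \<Rightarrow> real) \<Rightarrow> ('a::real_normed_vector \<Rightarrow> real) \<Rightarrow> real" where
  "dfun A c = (\<lambda>k. if k \<in> lip0 then (\<Sum>x\<in>A. c x * k x) else 0)"

lemma ubdd_comb:
  assumes "ubdd \<phi>" "ubdd \<psi>" shows "ubdd (\<lambda>k. a * \<phi> k + b * \<psi> k)"
proof -
  obtain C1 where C1: "\<forall>k\<in>lip0. lipnorm k \<le> 1 \<longrightarrow> \<bar>\<phi> k\<bar> \<le> C1" using assms(1) unfolding ubdd_def by blast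
  obtain C2 where C2: "\<forall>k\<in>lip0. lipnorm k \<le> 1 \<longrightarrow> \<bar>\<psi> k\<bar> \<le> C2" using assms(2) unfolding ubdd_def by blast
  have "\<bar>a * \<phi> k + b * \<psi> k\<bar> \<le> \<bar>a\<bar> * C1 + \<bar>b\<bar> * C2" if "k \<in> lip0" "lipnorm k \<le> 1" for k
  proof -
    have "\<bar>a * \<phi> k + b * \<psi> k\<bar> \<le> \<bar>a\<bar> * \<bar>\<phi> k\<bar> + \<bar>b\<bar> * \<bar>\<psi> k\<bar>" by (simp add: abs_mult[symmetric] abs_triangle_ineq)
    also have "\<dots> \<le> \<bar>a\<bar> * C1 + \<bar>b\<bar> * C2" using C1 C2 that by (intro add_mono mult_left_mono) auto
    finally show ?thesis .
  qed
  then show ?thesis unfolding ubdd_def by blast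
qed

lemma freesp_flin: "\<phi> \<in> freesp \<Longrightarrow> flin \<phi>"
  unfolding freesp_def flin_def by blast

lemma freesp_van: "\<phi> \<in> freesp \<Longrightarrow> g \<notin> lip0 \<Longrightarrow> \<phi> g = 0"
  unfolding freesp_def by blast

lemma dfun_flin: "flin (dfun A c)"
  unfolding flin_def dfun_def
  by (auto simp: lip0_comb_real sum_distrib_left sum.distrib algebra_simps)

lemma dfun_ubdd:
  assumes "finite A" shows "ubdd (dfun A c)"
proof -
  have "\<bar>dfun A c k\<bar> \<le> (\<Sum>x\<in>A. \<bar>c x\<bar> * norm x)" if "k \<in> lip0" "lipnorm k \<le> 1" for k
  proof -
    have k0: "k 0 = 0" using that unfolding lip0_def by auto
    have "\<bar>dfun A c k\<bar> = \<bar>\<Sum>x\<in>A. c x * k x\<bar>" using that unfolding dfun_def by simp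
    also have "\<dots> \<le> (\<Sum>x\<in>A. \<bar>c x * k x\<bar>)" by (rule sum_abs)
    also have "\<dots> \<le> (\<Sum>x\<in>A. \<bar>c x\<bar> * norm x)"
    proof (rule sum_mono)
      fix x
      have "\<bar>k x\<bar> \<le> lipnorm k * norm (x - 0)" using lip_ineq[OF that(1), of x 0] k0 by simp
      also have "\<dots> \<le> norm x" using that(2) mult_right_mono[of "lipnorm k" 1 "norm x"] by simp
      finally show "\<bar>c x * k x\<bar> \<le> \<bar>c x\<bar> * norm x" by (simp add: abs_mult mult_left_mono)
    qed
    finally show ?thesis .
  qed
  then show ?thesis unfolding ubdd_def by blast
qed

lemma dfun_in_span: "finite A \<Longrightarrow> dfun A c \<in> delta_span"
  unfolding delta_span_def dfun_def by blast

lemma delta_spanE: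
  assumes "\<phi> \<in> delta_span" obtains A c where "finite A" "\<phi> = dfun A c"
  using assms unfolding delta_span_def dfun_def by blast

lemma dfun_comb:
  assumes "finite A" "finite B"
  shows "(\<lambda>k. a * dfun A c k + b * dfun B d k) =
    dfun (A \<union> B) (\<lambda>x. a * (if x \<in> A then c x else 0) + b * (if x \<in> B then d x else 0))"
proof
  fix k
  have 1: "(\<Sum>x\<in>A. c x * k x) = (\<Sum>x\<in>A\<union>B. (if x \<in> A then c x else 0) * k x)"
    using assms by (intro sum.mono_neutral_cong_left) auto
  have 2: "(\<Sum>x\<in>B. d x * k x) = (\<Sum>x\<in>A\<union>B. (if x \<in> B then d x else 0) * k x)"
    using assms by (intro sum.mono_neutral_cong_left) auto
  show "a * dfun A c k + b * dfun B d k = dfun (A \<union> B) (\<lambda>x. a * (if x \<in> A then c x else 0) + b * (if x \<in> B then d x else 0)) k"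
    unfolding dfun_def using 1 2
    by (simp add: sum_distrib_left sum.distrib algebra_simps)
qed

lemma delta_span_comb:
  assumes "\<phi> \<in> delta_span" "\<psi> \<in> delta_span"
  shows "(\<lambda>k. a * \<phi> k + b * \<psi> k) \<in> delta_span"
proof -
  obtain A c where A: "finite A" "\<phi> = dfun A c" using assms(1) by (rule delta_spanE)
  obtain B d where B: "finite B" "\<psi> = dfun B d" using assms(2) by (rule delta_spanE)
  show ?thesis using A B dfun_comb[OF A(1) B(1)] dfun_in_span[of "A \<union> B"] by simp
qed

lemma delta_span_ubdd: "\<phi> \<in> delta_span \<Longrightarrow> ubdd \<phi>"
  by (metis delta_spanE dfun_ubdd)

lemma delta_span_flin: "\<phi> \<in> delta_span \<Longrightarrow> flin \<phi>"
  by (metis delta_spanE dfun_flin)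

lemma delta_span_van: "\<phi> \<in> delta_span \<Longrightarrow> g \<notin> lip0 \<Longrightarrow> \<phi> g = 0"
  by (metis delta_spanE dfun_def)

locale ntr =
  fixes x0 :: "'a::real_normed_vector"
  assumes x0: "x0 \<noteq> 0"
begin

lemma offdiag_ne: "(offdiag :: ('a \<times> 'a) set) \<noteq> {}"
  using x0 unfolding offdiag_def by auto

lemma lipnorm_le:
  fixes F :: "'a \<Rightarrow> 'c::real_normed_vector"
  assumes "\<And>p q. p \<noteq> q \<Longrightarrow> norm (F p - F q) / norm (p - q) \<le> L"
  shows "lipnorm F \<le> L"
  unfolding lipnorm_def using offdiag_ne assms by (intro cSUP_least) (auto simp: offdiag_def)

lemma lipnorm_nonneg:
  fixes F :: "'a \<Rightarrow> 'c::real_normed_vector"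
  assumes "F \<in> lip0" shows "0 \<le> lipnorm F"
  using lipnorm_ge[OF assms, of x0 0] x0 by (meson divide_nonneg_nonneg norm_ge_zero order_trans)

lemma lipnorm_zero_fun: "lipnorm (\<lambda>_::'a. 0::'c::real_normed_vector) \<le> 0"
  by (rule lipnorm_le) simp

lemma zero_lip0: "(\<lambda>_::'a. 0::'c::real_normed_vector) \<in> lip0"
  by (rule lip0I[where C=0]) auto

lemma lipnorm_zero_eq:
  fixes F :: "'a \<Rightarrow> 'c::real_normed_vector"
  assumes "F \<in> lip0" "lipnorm F = 0" shows "F = (\<lambda>_. 0)"
proof
  fix t
  have "F 0 = 0" using assms unfolding lip0_def by auto
  then show "F t = 0" using lip_ineq[OF assms(1), of t 0] assms(2) by simp
qed

lemma freesp_ubdd: "(\<phi> :: ('a \<Rightarrow> real) \<Rightarrow> real) \<in> freesp \<Longrightarrow> ubdd \<phi>"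
proof -
  assume "\<phi> \<in> freesp"
  then obtain C where C: "\<forall>g\<in>lip0. \<bar>\<phi> g\<bar> \<le> C * lipnorm g" unfolding freesp_def by blast
  have "\<bar>\<phi> k\<bar> \<le> max C 0" if "k \<in> lip0" "lipnorm k \<le> 1" for k :: "'a \<Rightarrow> real"
  proof -
    have "C * lipnorm k \<le> max C 0 * lipnorm k" using lipnorm_nonneg[OF that(1)] by (intro mult_right_mono) auto
    also have "\<dots> \<le> max C 0 * 1" using that(2) by (intro mult_left_mono) auto
    finally show ?thesis using C that by force
  qed
  then show "ubdd \<phi>" unfolding ubdd_def by blast
qed

lemma dnorm_ge:
  fixes \<phi> :: "('a \<Rightarrow> real) \<Rightarrow> real"
  assumes "ubdd \<phi>" "k \<in> lip0" "lipnorm k \<le> 1"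
  shows "\<bar>\<phi> k\<bar> \<le> dnorm \<phi>"
proof -
  obtain C where C: "\<forall>k\<in>lip0. lipnorm k \<le> 1 \<longrightarrow> \<bar>\<phi> k\<bar> \<le> C" using assms(1) unfolding ubdd_def by blast
  show ?thesis unfolding dnorm_def using assms C
    by (intro cSUP_upper2[of _ _ k]) (auto intro!: bdd_aboveI2[where M=C])
qed

lemma dnorm_le:
  assumes "\<And>k. k \<in> lip0 \<Longrightarrow> lipnorm k \<le> 1 \<Longrightarrow> \<bar>\<phi> k\<bar> \<le> C"
  shows "dnorm (\<phi> :: ('a \<Rightarrow> real) \<Rightarrow> real) \<le> C"
proof -
  have z1: "(\<lambda>_::'a. 0::real) \<in> lip0" by (rule zero_lip0)
  have z2: "lipnorm (\<lambda>_::'a. 0::real) \<le> 0" by (rule lipnorm_zero_fun)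
  have "(\<lambda>_::'a. 0::real) \<in> {g \<in> lip0. lipnorm g \<le> 1}" using z1 z2 by auto
  then show ?thesis unfolding dnorm_def using assms by (intro cSUP_least) auto
qed

lemma dnorm_nonneg: "ubdd (\<phi> :: ('a \<Rightarrow> real) \<Rightarrow> real) \<Longrightarrow> 0 \<le> dnorm \<phi>"
proof -
  assume u: "ubdd \<phi>"
  have z1: "(\<lambda>_::'a. 0::real) \<in> lip0" by (rule zero_lip0)
  have z2: "lipnorm (\<lambda>_::'a. 0::real) \<le> 0" by (rule lipnorm_zero_fun)
  show ?thesis using dnorm_ge[OF u z1] z2 by force
qed

lemma dnorm_dom:
  fixes \<phi> \<psi>1 \<psi>2 :: "('a \<Rightarrow> real) \<Rightarrow> real"
  assumes "ubdd \<psi>1" "ubdd \<psi>2" "a \<ge> 0" "b \<ge> 0"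
    and "\<And>k. k \<in> lip0 \<Longrightarrow> lipnorm k \<le> 1 \<Longrightarrow> \<bar>\<phi> k\<bar> \<le> a * \<bar>\<psi>1 k\<bar> + b * \<bar>\<psi>2 k\<bar>"
  shows "dnorm (\<phi> :: ('a \<Rightarrow> real) \<Rightarrow> real) \<le> a * dnorm \<psi>1 + b * dnorm \<psi>2"
proof (rule dnorm_le)
  fix k :: "'a \<Rightarrow> real" assume k: "k \<in> lip0" "lipnorm k \<le> 1"
  have "a * \<bar>\<psi>1 k\<bar> + b * \<bar>\<psi>2 k\<bar> \<le> a * dnorm \<psi>1 + b * dnorm \<psi>2"
    using assms k dnorm_ge by (intro add_mono mult_left_mono) auto
  then show "\<bar>\<phi> k\<bar> \<le> a * dnorm \<psi>1 + b * dnorm \<psi>2" using assms(5)[OF k] by linarith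
qed

lemma dnorm_lip:
  fixes \<phi> :: "('a \<Rightarrow> real) \<Rightarrow> real"
  assumes "ubdd \<phi>" "flin \<phi>" "k \<in> lip0"
  shows "\<bar>\<phi> k\<bar> \<le> dnorm \<phi> * lipnorm k"
proof (cases "lipnorm k = 0")
  case True
  then have k: "k = (\<lambda>_. 0)" using lipnorm_zero_eq assms(3) by blast
  have "\<phi> (\<lambda>t. 0 * k t + 0 * k t) = 0 * \<phi> k + 0 * \<phi> k" using assms(2,3) unfolding flin_def by blast
  then have "\<phi> k = 0" using k by simp
  then show ?thesis using True by simp
next
  case False
  define L where "L = lipnorm k"
  have L: "L > 0" using False lipnorm_nonneg[OF assms(3)] L_def by simp
  define k' where "k' = (\<lambda>t. (1/L) * k t + 0 * k t)"
  have k'l: "k' \<in> lip0" unfolding k'_def using lip0_comb_real[OF assms(3) assms(3)] .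
  have "lipnorm k' \<le> 1"
  proof (rule lipnorm_le)
    fix p q :: 'a assume "p \<noteq> q"
    have kd: "k' p - k' q = (1/L) * (k p - k q)" unfolding k'_def by (simp add: algebra_simps)
    have "norm (k' p - k' q) / norm (p - q) = (1/L) * (norm (k p - k q) / norm (p - q))"
      unfolding kd using L by (simp add: abs_mult)
    also have "\<dots> \<le> (1/L) * L" using lipnorm_ge[OF assms(3) \<open>p \<noteq> q\<close>] L L_def
      by (intro mult_left_mono) auto
    finally show "norm (k' p - k' q) / norm (p - q) \<le> 1" using L by simp
  qed
  then have "\<bar>\<phi> k'\<bar> \<le> dnorm \<phi>" using dnorm_ge[OF assms(1) k'l] by simp
  moreover have "\<phi> k' = (1/L) * \<phi> k + 0 * \<phi> k" using assms(2,3) unfolding flin_def k'_def by blast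
  hence "\<phi> k' = (1/L) * \<phi> k" by simp
  ultimately have "(1/L) * \<bar>\<phi> k\<bar> \<le> dnorm \<phi>" using L by (simp add: abs_mult)
  then show ?thesis using L L_def by (simp add: field_simps)
qed

lemma dnorm_zero_fun: "dnorm (\<lambda>_::('a \<Rightarrow> real). 0::real) \<le> 0"
  by (rule dnorm_le) simp

lemma dfun_freesp: "finite A \<Longrightarrow> dfun A c \<in> (freesp :: (('a \<Rightarrow> real) \<Rightarrow> real) set)"
proof -
  assume A: "finite A"
  have "\<forall>g. g \<notin> lip0 \<longrightarrow> dfun A c g = 0" unfolding dfun_def by simp
  moreover have "\<forall>g\<in>lip0. \<bar>dfun A c g\<bar> \<le> dnorm (dfun A c) * lipnorm g"
    using dnorm_lip[OF dfun_ubdd[OF A] dfun_flin] by blast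
  moreover have "\<forall>e>0. \<exists>\<psi>\<in>delta_span. dnorm (\<lambda>g. dfun A c g - \<psi> g) < e"
  proof (intro allI impI)
    fix e :: real assume "e > 0"
    have "dnorm (\<lambda>g. dfun A c g - dfun A c g) \<le> 0" using dnorm_zero_fun by simp
    then show "\<exists>\<psi>\<in>delta_span. dnorm (\<lambda>g. dfun A c g - \<psi> g) < e"
      using dfun_in_span[OF A, of c] \<open>e > 0\<close> by (intro bexI[of _ "dfun A c"]) auto
  qed
  ultimately show ?thesis using dfun_flin unfolding freesp_def flin_def by blast
qed

lemma delta_span_freesp: "\<phi> \<in> delta_span \<Longrightarrow> \<phi> \<in> (freesp :: (('a \<Rightarrow> real) \<Rightarrow> real) set)"
  by (metis delta_spanE dfun_freesp)

lemma freesp_comb: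
  fixes \<phi> \<psi> :: "('a \<Rightarrow> real) \<Rightarrow> real"
  assumes "\<phi> \<in> freesp" "\<psi> \<in> freesp"
  shows "(\<lambda>k. a * \<phi> k + b * \<psi> k) \<in> (freesp :: (('a \<Rightarrow> real) \<Rightarrow> real) set)"
proof -
  let ?\<chi> = "\<lambda>k. a * \<phi> k + b * \<psi> k"
  have van: "\<forall>g. g \<notin> lip0 \<longrightarrow> ?\<chi> g = 0" by (simp add: freesp_van[OF assms(1)] freesp_van[OF assms(2)])
  have lin: "flin ?\<chi>" using freesp_flin[OF assms(1)] freesp_flin[OF assms(2)]
    unfolding flin_def by (simp add: algebra_simps)
  have ub: "ubdd ?\<chi>" using ubdd_comb freesp_ubdd assms by blast
  have bd: "\<forall>g\<in>lip0. \<bar>?\<chi> g\<bar> \<le> dnorm ?\<chi> * lipnorm g" using dnorm_lip[OF ub lin] by blast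
  have ap: "\<exists>\<psi>'\<in>delta_span. dnorm (\<lambda>g. ?\<chi> g - \<psi>' g) < e" if e: "e > 0" for e
  proof -
    define e' where "e' = e / (\<bar>a\<bar> + \<bar>b\<bar> + 1)"
    have e': "e' > 0" using e unfolding e'_def by (simp add: add_pos_nonneg)
    obtain \<psi>1 where p1: "\<psi>1 \<in> delta_span" "dnorm (\<lambda>g. \<phi> g - \<psi>1 g) < e'" using assms(1) e' unfolding freesp_def by blast
    obtain \<psi>2 where p2: "\<psi>2 \<in> delta_span" "dnorm (\<lambda>g. \<psi> g - \<psi>2 g) < e'" using assms(2) e' unfolding freesp_def by blast
    have u1: "ubdd (\<lambda>g. \<phi> g - \<psi>1 g)" using ubdd_comb[OF freesp_ubdd[OF assms(1)] delta_span_ubdd[OF p1(1)], of 1 "-1"] by simp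
    have u2: "ubdd (\<lambda>g. \<psi> g - \<psi>2 g)" using ubdd_comb[OF freesp_ubdd[OF assms(2)] delta_span_ubdd[OF p2(1)], of 1 "-1"] by simp
    have "dnorm (\<lambda>g. ?\<chi> g - (a * \<psi>1 g + b * \<psi>2 g)) \<le> \<bar>a\<bar> * dnorm (\<lambda>g. \<phi> g - \<psi>1 g) + \<bar>b\<bar> * dnorm (\<lambda>g. \<psi> g - \<psi>2 g)"
    proof (rule dnorm_dom[OF u1 u2])
      fix k
      have "\<bar>a * \<phi> k + b * \<psi> k - (a * \<psi>1 k + b * \<psi>2 k)\<bar> = \<bar>a * (\<phi> k - \<psi>1 k) + b * (\<psi> k - \<psi>2 k)\<bar>"
        by (simp add: algebra_simps)
      also have "\<dots> \<le> \<bar>a\<bar> * \<bar>\<phi> k - \<psi>1 k\<bar> + \<bar>b\<bar> * \<bar>\<psi> k - \<psi>2 k\<bar>"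
        by (metis abs_mult abs_triangle_ineq)
      finally show "\<bar>a * \<phi> k + b * \<psi> k - (a * \<psi>1 k + b * \<psi>2 k)\<bar> \<le> \<bar>a\<bar> * \<bar>\<phi> k - \<psi>1 k\<bar> + \<bar>b\<bar> * \<bar>\<psi> k - \<psi>2 k\<bar>" .
    qed auto
    also have "\<dots> \<le> \<bar>a\<bar> * e' + \<bar>b\<bar> * e'" using p1 p2
      by (intro add_mono mult_left_mono) auto
    also have "\<dots> = (\<bar>a\<bar> + \<bar>b\<bar>) * e'" by (simp add: algebra_simps)
    also have "\<dots> < (\<bar>a\<bar> + \<bar>b\<bar> + 1) * e'" using e' by (intro mult_strict_right_mono) auto
    also have "\<dots> = e" unfolding e'_def by (simp add: add_pos_nonneg)
    finally show ?thesis using delta_span_comb[OF p1(1) p2(1), of a b]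
      by (intro bexI[of _ "\<lambda>k. a * \<psi>1 k + b * \<psi>2 k"]) auto
  qed
  show ?thesis unfolding freesp_def using van lin bd ap unfolding flin_def by blast
qed

lemma KL:
  fixes F :: "'a \<Rightarrow> 'b::real_normed_vector" and p :: "'b \<Rightarrow> real"
  assumes "sublin p" "\<And>y. p (- y) = p y" "F 0 = 0" "L \<ge> 0"
    "\<And>a b. p (F a - F b) \<le> L * norm (a - b)" "finite A"
  shows "p (\<Sum>x\<in>A. c x *\<^sub>R F x) \<le> L * dnorm (dfun A c)"
proof -
  interpret sublin p by fact
  obtain l where l: "linear l" "\<forall>x. l x \<le> p x" "l (\<Sum>x\<in>A. c x *\<^sub>R F x) = p (\<Sum>x\<in>A. c x *\<^sub>R F x)"
    using hahn_banach by blast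
  have labs: "\<bar>l y\<bar> \<le> p y" for y
    using l(2)[rule_format, of y] l(2)[rule_format, of "-y"] linear_neg[OF l(1), of y] assms(2)[of y] by auto
  define K where "K = (\<lambda>t. l (F t))"
  have Kb: "norm (K a - K b) \<le> L * norm (a - b)" for a b
  proof -
    have "norm (K a - K b) = \<bar>l (F a - F b)\<bar>" unfolding K_def using linear_diff[OF l(1)] by simp
    also have "\<dots> \<le> L * norm (a - b)" using labs assms(5) order_trans by blast
    finally show ?thesis .
  qed
  have K0: "K 0 = 0" unfolding K_def using assms(3) linear_0[OF l(1)] by simp
  have Kl: "K \<in> lip0" using lip0I[OF K0 Kb] .
  have KL: "lipnorm K \<le> L"
    by (rule lipnorm_le) (use Kb in \<open>simp add: divide_le_eq\<close>)
  have "dfun A c K = (\<Sum>x\<in>A. c x * l (F x))" unfolding dfun_def K_def using Kl K_def by simp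
  also have "\<dots> = l (\<Sum>x\<in>A. c x *\<^sub>R F x)"
    by (simp add: linear_sum[OF l(1)] linear_scale[OF l(1)])
  finally have eq: "dfun A c K = p (\<Sum>x\<in>A. c x *\<^sub>R F x)" using l(3) by simp
  have "\<bar>dfun A c K\<bar> \<le> dnorm (dfun A c) * lipnorm K"
    using dnorm_lip[OF dfun_ubdd[OF assms(6)] dfun_flin Kl] .
  also have "\<dots> \<le> dnorm (dfun A c) * L"
    using KL dnorm_nonneg[OF dfun_ubdd[OF assms(6)]] by (intro mult_left_mono) auto
  finally show ?thesis using eq by (simp add: mult.commute)
qed

lemma KL_norm:
  fixes F :: "'a \<Rightarrow> 'b::real_normed_vector"
  assumes "F \<in> lip0" "finite A"
  shows "norm (\<Sum>x\<in>A. c x *\<^sub>R F x) \<le> lipnorm F * dnorm (dfun A c)"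
proof (rule KL)
  show "sublin norm" by unfold_locales (auto simp: norm_triangle_ineq)
  show "F 0 = 0" using assms unfolding lip0_def by auto
  show "0 \<le> lipnorm F" using lipnorm_nonneg[OF assms(1)] .
  show "norm (F a - F b) \<le> lipnorm F * norm (a - b)" for a b using lip_ineq[OF assms(1)] .
qed (use assms in auto)

end

lemma le_eps_lemma:
  fixes x y C :: real
  assumes "\<And>n. x \<le> y + C / real (Suc n)"
  shows "x \<le> y"
proof -
  have "(\<lambda>n. y + C * inverse (real (Suc n))) \<longlonglongrightarrow> y + C * 0"
    by (intro tendsto_intros LIMSEQ_inverse_real_of_nat)
  then show ?thesis using assms
    by (intro LIMSEQ_le_const[of "\<lambda>n. y + C * inverse (real (Suc n))"]) (auto simp: field_simps)
qed

lemma arith3: "(L::real)*(2/s) + L*(1/s + d) = L*d + 3*L/s"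
  by (simp add: divide_inverse algebra_simps)

lemma arith4: "(L::real)*((A+B)/s) + (A*(L*(2/s)) + B*(L*(2/s))) = 0 + 3*L*(A+B)/s"
  by (simp add: divide_inverse algebra_simps)

lemma sum_if_ext:
  fixes F :: "'a \<Rightarrow> 'b::real_vector"
  assumes "finite B" "A \<subseteq> B"
  shows "(\<Sum>x\<in>B. (if x \<in> A then c x else 0) *\<^sub>R F x) = (\<Sum>x\<in>A. c x *\<^sub>R F x)"
proof -
  have "(\<Sum>x\<in>A. c x *\<^sub>R F x) = (\<Sum>x\<in>B. (if x \<in> A then c x else 0) *\<^sub>R F x)"
    using assms by (intro sum.mono_neutral_cong_left) auto
  then show ?thesis by simp
qed

lemma sum_comb_ext:
  fixes F :: "'a \<Rightarrow> 'b::real_vector"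
  assumes "finite A" "finite B"
  shows "(\<Sum>x\<in>A \<union> B. (a * (if x \<in> A then c x else 0) + b * (if x \<in> B then d x else 0)) *\<^sub>R F x)
    = a *\<^sub>R (\<Sum>x\<in>A. c x *\<^sub>R F x) + b *\<^sub>R (\<Sum>x\<in>B. d x *\<^sub>R F x)"
proof -
  have "(\<Sum>x\<in>A \<union> B. (a * (if x \<in> A then c x else 0) + b * (if x \<in> B then d x else 0)) *\<^sub>R F x)
     = a *\<^sub>R (\<Sum>x\<in>A \<union> B. (if x \<in> A then c x else 0) *\<^sub>R F x) + b *\<^sub>R (\<Sum>x\<in>A \<union> B. (if x \<in> B then d x else 0) *\<^sub>R F x)"
    by (simp add: scaleR_add_left sum.distrib scaleR_sum_right)
  also have "\<dots> = a *\<^sub>R (\<Sum>x\<in>A. c x *\<^sub>R F x) + b *\<^sub>R (\<Sum>x\<in>B. d x *\<^sub>R F x)"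
    using assms by (simp add: sum_if_ext)
  finally show ?thesis .
qed

definition rep :: "(('a::real_normed_vector \<Rightarrow> real) \<Rightarrow> real) \<Rightarrow> 'a set \<times> ('a \<Rightarrow> real)" where
  "rep \<psi> = (SOME r. finite (fst r) \<and> \<psi> = dfun (fst r) (snd r))"

definition T0 :: "('a::real_normed_vector \<Rightarrow> 'b::real_normed_vector) \<Rightarrow> (('a \<Rightarrow> real) \<Rightarrow> real) \<Rightarrow> 'b" where
  "T0 F \<psi> = (\<Sum>x\<in>fst (rep \<psi>). snd (rep \<psi>) x *\<^sub>R F x)"

definition apx :: "(('a::real_normed_vector \<Rightarrow> real) \<Rightarrow> real) \<Rightarrow> nat \<Rightarrow> (('a \<Rightarrow> real) \<Rightarrow> real)" where
  "apx \<phi> n = (SOME \<psi>. \<psi> \<in> delta_span \<and> dnorm (\<lambda>g. \<phi> g - \<psi> g) < 1 / real (Suc n))"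

definition Top :: "('a::real_normed_vector \<Rightarrow> 'b::real_normed_vector) \<Rightarrow> (('a \<Rightarrow> real) \<Rightarrow> real) \<Rightarrow> 'b" where
  "Top F \<phi> = lim (\<lambda>n. T0 F (apx \<phi> n))"

definition mol :: "'a::real_normed_vector \<Rightarrow> 'a \<Rightarrow> ('a \<Rightarrow> real) \<Rightarrow> real" where
  "mol p q = dfun {p, q} (\<lambda>z. if z = p then 1 / norm (p - q) else - 1 / norm (p - q))"

lemma rep_ok:
  assumes "\<psi> \<in> delta_span" shows "finite (fst (rep \<psi>))" "\<psi> = dfun (fst (rep \<psi>)) (snd (rep \<psi>))"
proof -
  obtain A c where "finite A" "\<psi> = dfun A c" using assms by (rule delta_spanE)
  then have "\<exists>r. finite (fst r) \<and> \<psi> = dfun (fst r) (snd r)" by (intro exI[of _ "(A,c)"]) simp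
  then have "finite (fst (rep \<psi>)) \<and> \<psi> = dfun (fst (rep \<psi>)) (snd (rep \<psi>))"
    unfolding rep_def by (rule someI_ex)
  then show "finite (fst (rep \<psi>))" "\<psi> = dfun (fst (rep \<psi>)) (snd (rep \<psi>))" by auto
qed

lemma mol_eq: "mol p q = (\<lambda>k. if k \<in> lip0 then (k p - k q) / norm (p - q) else 0)" if "p \<noteq> q"
  using that unfolding mol_def dfun_def by (auto simp: diff_divide_distrib)

lemma mol_in: "mol p q \<in> delta_span"
  unfolding mol_def by (rule dfun_in_span) simp

context ntr
begin

lemma dn_ubdd_diff: "ubdd \<phi> \<Longrightarrow> ubdd \<psi> \<Longrightarrow> ubdd (\<lambda>g. \<phi> g - \<psi> g)"
  using ubdd_comb[of \<phi> \<psi> 1 "-1"] by simp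

lemma dn_tri:
  fixes \<phi>1 \<phi>2 \<phi>3 :: "('a \<Rightarrow> real) \<Rightarrow> real"
  assumes "ubdd \<phi>1" "ubdd \<phi>2" "ubdd \<phi>3"
  shows "dnorm (\<lambda>g. \<phi>1 g - \<phi>3 g) \<le> dnorm (\<lambda>g. \<phi>1 g - \<phi>2 g) + dnorm (\<lambda>g. \<phi>2 g - \<phi>3 g)"
  using dnorm_dom[OF dn_ubdd_diff[OF assms(1,2)] dn_ubdd_diff[OF assms(2,3)], of 1 1 "\<lambda>g. \<phi>1 g - \<phi>3 g"]
  by simp

lemma dn_sym:
  fixes \<phi>1 \<phi>2 :: "('a \<Rightarrow> real) \<Rightarrow> real"
  assumes "ubdd \<phi>1" "ubdd \<phi>2"
  shows "dnorm (\<lambda>g. \<phi>2 g - \<phi>1 g) = dnorm (\<lambda>g. \<phi>1 g - \<phi>2 g)"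
proof -
  have "dnorm (\<lambda>g. \<phi>2 g - \<phi>1 g) \<le> 1 * dnorm (\<lambda>g. \<phi>1 g - \<phi>2 g) + 0 * dnorm (\<lambda>g. \<phi>1 g - \<phi>2 g)"
    by (rule dnorm_dom[OF dn_ubdd_diff[OF assms(1,2)] dn_ubdd_diff[OF assms(1,2)]]) auto
  moreover have "dnorm (\<lambda>g. \<phi>1 g - \<phi>2 g) \<le> 1 * dnorm (\<lambda>g. \<phi>2 g - \<phi>1 g) + 0 * dnorm (\<lambda>g. \<phi>2 g - \<phi>1 g)"
    by (rule dnorm_dom[OF dn_ubdd_diff[OF assms(2,1)] dn_ubdd_diff[OF assms(2,1)]]) auto
  ultimately show ?thesis by simp
qed

lemma apx:
  fixes \<phi> :: "('a \<Rightarrow> real) \<Rightarrow> real"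
  assumes "\<phi> \<in> freesp"
  shows "apx \<phi> n \<in> delta_span" "dnorm (\<lambda>g. \<phi> g - apx \<phi> n g) < 1 / real (Suc n)"
proof -
  have pos: "1 / real (Suc n) > 0" by simp
  have "\<exists>\<psi>. \<psi> \<in> delta_span \<and> dnorm (\<lambda>g. \<phi> g - \<psi> g) < 1 / real (Suc n)"
    using assms pos unfolding freesp_def by blast
  then have "apx \<phi> n \<in> delta_span \<and> dnorm (\<lambda>g. \<phi> g - apx \<phi> n g) < 1 / real (Suc n)"
    unfolding apx_def by (rule someI_ex)
  then show "apx \<phi> n \<in> delta_span" "dnorm (\<lambda>g. \<phi> g - apx \<phi> n g) < 1 / real (Suc n)" by auto
qed

lemma T0_eq:
  fixes F :: "'a \<Rightarrow> 'b::real_normed_vector"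
  assumes F: "F \<in> lip0" and A: "finite A"
  shows "T0 F (dfun A c) = (\<Sum>x\<in>A. c x *\<^sub>R F x)"
proof -
  define B where "B = fst (rep (dfun A c))"
  define d where "d = snd (rep (dfun A c))"
  have B: "finite B" "dfun A c = dfun B d" using rep_ok[OF dfun_in_span[OF A]] unfolding B_def d_def by auto
  define e where "e = (\<lambda>x. 1 * (if x \<in> B then d x else 0) + (-1) * (if x \<in> A then c x else 0))"
  have "dfun (B \<union> A) e = (\<lambda>k. 1 * dfun B d k + (-1) * dfun A c k)"
    unfolding e_def by (rule dfun_comb[OF B(1) A, of 1 d "-1" c, symmetric])
  also have "\<dots> = (\<lambda>k. 0)" using B(2) by simp
  finally have de: "dfun (B \<union> A) e = (\<lambda>k. 0)" .
  have "norm (\<Sum>x\<in>B \<union> A. e x *\<^sub>R F x) \<le> lipnorm F * dnorm (dfun (B \<union> A) e)"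
    using KL_norm[OF F] B(1) A by simp
  also have "\<dots> \<le> 0" unfolding de using dnorm_zero_fun lipnorm_nonneg[OF F]
    by (simp add: mult_nonneg_nonpos)
  finally have "(\<Sum>x\<in>B \<union> A. e x *\<^sub>R F x) = 0" by simp
  moreover have "(\<Sum>x\<in>B \<union> A. e x *\<^sub>R F x) = 1 *\<^sub>R (\<Sum>x\<in>B. d x *\<^sub>R F x) + (-1) *\<^sub>R (\<Sum>x\<in>A. c x *\<^sub>R F x)"
    unfolding e_def by (rule sum_comb_ext[OF B(1) A])
  ultimately show ?thesis unfolding T0_def B_def[symmetric] d_def[symmetric] by simp
qed

lemma T0_lin:
  fixes F :: "'a \<Rightarrow> 'b::real_normed_vector"
  assumes F: "F \<in> lip0" and "\<psi> \<in> delta_span" "\<psi>' \<in> delta_span"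
  shows "T0 F (\<lambda>k. a * \<psi> k + b * \<psi>' k) = a *\<^sub>R T0 F \<psi> + b *\<^sub>R T0 F \<psi>'"
proof -
  obtain A c where A: "finite A" "\<psi> = dfun A c" using assms(2) by (rule delta_spanE)
  obtain B d where B: "finite B" "\<psi>' = dfun B d" using assms(3) by (rule delta_spanE)
  show ?thesis unfolding A(2) B(2) dfun_comb[OF A(1) B(1)]
    using T0_eq[OF F] A(1) B(1) sum_comb_ext[OF A(1) B(1)] by simp
qed

lemma T0_bound:
  fixes F :: "'a \<Rightarrow> 'b::real_normed_vector"
  assumes F: "F \<in> lip0" and "\<psi> \<in> delta_span"
  shows "norm (T0 F \<psi>) \<le> lipnorm F * dnorm \<psi>"
proof -
  obtain A c where A: "finite A" "\<psi> = dfun A c" using assms(2) by (rule delta_spanE)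
  show ?thesis unfolding A(2) T0_eq[OF F A(1)] using KL_norm[OF F A(1)] .
qed

lemma T0_diff:
  fixes F :: "'a \<Rightarrow> 'b::real_normed_vector"
  assumes F: "F \<in> lip0" and "\<psi> \<in> delta_span" "\<psi>' \<in> delta_span"
  shows "norm (T0 F \<psi> - T0 F \<psi>') \<le> lipnorm F * dnorm (\<lambda>g. \<psi> g - \<psi>' g)"
proof -
  have "T0 F (\<lambda>k. 1 * \<psi> k + (-1) * \<psi>' k) = 1 *\<^sub>R T0 F \<psi> + (-1) *\<^sub>R T0 F \<psi>'"
    by (rule T0_lin[OF assms])
  moreover have "(\<lambda>k. 1 * \<psi> k + (-1) * \<psi>' k) \<in> delta_span" by (rule delta_span_comb[OF assms(2,3)])
  ultimately show ?thesis using T0_bound[OF F, of "\<lambda>k. 1 * \<psi> k + (-1) * \<psi>' k"] by simp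
qed

lemma T0_apx_diff:
  fixes F :: "'a \<Rightarrow> 'b::real_normed_vector"
  assumes F: "F \<in> lip0" and \<phi>: "\<phi> \<in> freesp"
  shows "norm (T0 F (apx \<phi> n) - T0 F (apx \<phi> m)) \<le> lipnorm F * (1 / real (Suc n) + 1 / real (Suc m))"
proof -
  have u: "ubdd (apx \<phi> n)" "ubdd (apx \<phi> m)" "ubdd \<phi>"
    using apx[OF \<phi>] delta_span_ubdd freesp_ubdd[OF \<phi>] by auto
  have "dnorm (\<lambda>g. apx \<phi> n g - apx \<phi> m g) \<le> dnorm (\<lambda>g. apx \<phi> n g - \<phi> g) + dnorm (\<lambda>g. \<phi> g - apx \<phi> m g)"
    by (rule dn_tri[OF u(1) u(3) u(2)])
  also have "\<dots> = dnorm (\<lambda>g. \<phi> g - apx \<phi> n g) + dnorm (\<lambda>g. \<phi> g - apx \<phi> m g)"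
    using dn_sym[OF u(3) u(1)] by simp
  also have "\<dots> \<le> 1 / real (Suc n) + 1 / real (Suc m)" using apx(2)[OF \<phi>] by (intro add_mono) (auto intro: less_imp_le)
  finally have "dnorm (\<lambda>g. apx \<phi> n g - apx \<phi> m g) \<le> 1 / real (Suc n) + 1 / real (Suc m)" .
  then show ?thesis using T0_diff[OF F apx(1)[OF \<phi>] apx(1)[OF \<phi>], of n m] lipnorm_nonneg[OF F]
    by (meson mult_left_mono order_trans)
qed

lemma Top_lim:
  fixes F :: "'a \<Rightarrow> 'b::banach"
  assumes F: "F \<in> lip0" and \<phi>: "\<phi> \<in> freesp"
  shows "(\<lambda>n. T0 F (apx \<phi> n)) \<longlonglongrightarrow> Top F \<phi>"
proof -
  let ?L = "lipnorm F"
  have L: "?L \<ge> 0" using lipnorm_nonneg[OF F] .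
  have "Cauchy (\<lambda>n. T0 F (apx \<phi> n))"
  proof (rule metric_CauchyI)
    fix e :: real assume e: "e > 0"
    obtain M :: nat where M: "2 * (?L + 1) / e < real M" using reals_Archimedean2 by blast
    have "dist (T0 F (apx \<phi> m)) (T0 F (apx \<phi> n)) < e" if "m \<ge> M" "n \<ge> M" for m n
    proof -
      have "2 * (?L + 1) / e > 0" using e L by simp
      then have Mpos: "real M > 0" using M by linarith
      have "1 / real (Suc m) \<le> 1 / real M" using that Mpos by (intro divide_left_mono) auto
      moreover have "1 / real (Suc n) \<le> 1 / real M" using that Mpos by (intro divide_left_mono) auto
      ultimately have s: "1 / real (Suc m) + 1 / real (Suc n) \<le> 2 / real M" by simp
      have "dist (T0 F (apx \<phi> m)) (T0 F (apx \<phi> n)) \<le> ?L * (1 / real (Suc m) + 1 / real (Suc n))"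
        unfolding dist_norm by (rule T0_apx_diff[OF F \<phi>])
      also have "\<dots> \<le> (?L + 1) * (2 / real M)" using s L by (intro mult_mono) auto
      also have "\<dots> < e" using M Mpos e L by (simp add: field_simps)
      finally show ?thesis .
    qed
    then show "\<exists>M. \<forall>m\<ge>M. \<forall>n\<ge>M. dist (T0 F (apx \<phi> m)) (T0 F (apx \<phi> n)) < e" by blast
  qed
  then obtain l where l: "(\<lambda>n. T0 F (apx \<phi> n)) \<longlonglongrightarrow> l" using convergent_eq_Cauchy by blast
  then show ?thesis unfolding Top_def using limI[OF l] by simp
qed

lemma Top_apx:
  fixes F :: "'a \<Rightarrow> 'b::banach"
  assumes F: "F \<in> lip0" and \<phi>: "\<phi> \<in> freesp"
  shows "norm (Top F \<phi> - T0 F (apx \<phi> n)) \<le> lipnorm F * (2 / real (Suc n))"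
proof -
  have "(\<lambda>m. norm (T0 F (apx \<phi> m) - T0 F (apx \<phi> n))) \<longlonglongrightarrow> norm (Top F \<phi> - T0 F (apx \<phi> n))"
    by (intro tendsto_intros Top_lim[OF F \<phi>])
  moreover have "\<exists>N. \<forall>m\<ge>N. norm (T0 F (apx \<phi> m) - T0 F (apx \<phi> n)) \<le> lipnorm F * (2 / real (Suc n))"
  proof (intro exI allI impI)
    fix m assume "m \<ge> n"
    then have "1 / real (Suc m) \<le> 1 / real (Suc n)" by (intro divide_left_mono) auto
    then have "lipnorm F * (1 / real (Suc m) + 1 / real (Suc n)) \<le> lipnorm F * (2 / real (Suc n))"
      using lipnorm_nonneg[OF F] by (intro mult_left_mono) auto
    then show "norm (T0 F (apx \<phi> m) - T0 F (apx \<phi> n)) \<le> lipnorm F * (2 / real (Suc n))"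
      using T0_apx_diff[OF F \<phi>, of m n] by linarith
  qed
  ultimately show ?thesis by (rule LIMSEQ_le_const2)
qed

lemma Top_close:
  fixes F :: "'a \<Rightarrow> 'b::banach"
  assumes F: "F \<in> lip0" and \<phi>: "\<phi> \<in> freesp" and \<psi>: "\<psi> \<in> delta_span"
  shows "norm (Top F \<phi> - T0 F \<psi>) \<le> lipnorm F * dnorm (\<lambda>g. \<phi> g - \<psi> g)"
proof (rule le_eps_lemma[where C = "3 * lipnorm F"])
  fix n
  let ?L = "lipnorm F"
  have L: "?L \<ge> 0" using lipnorm_nonneg[OF F] .
  have u: "ubdd (apx \<phi> n)" "ubdd \<phi>" "ubdd \<psi>"
    using apx[OF \<phi>] delta_span_ubdd freesp_ubdd[OF \<phi>] \<psi> by auto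
  have "dnorm (\<lambda>g. apx \<phi> n g - \<psi> g) \<le> dnorm (\<lambda>g. apx \<phi> n g - \<phi> g) + dnorm (\<lambda>g. \<phi> g - \<psi> g)"
    by (rule dn_tri[OF u(1) u(2) u(3)])
  also have "\<dots> \<le> 1 / real (Suc n) + dnorm (\<lambda>g. \<phi> g - \<psi> g)"
    using dn_sym[OF u(2) u(1)] apx(2)[OF \<phi>, of n] by simp
  finally have d: "dnorm (\<lambda>g. apx \<phi> n g - \<psi> g) \<le> 1 / real (Suc n) + dnorm (\<lambda>g. \<phi> g - \<psi> g)" .
  have "norm (Top F \<phi> - T0 F \<psi>) \<le> norm (Top F \<phi> - T0 F (apx \<phi> n)) + norm (T0 F (apx \<phi> n) - T0 F \<psi>)"
    using norm_triangle_ineq[of "Top F \<phi> - T0 F (apx \<phi> n)" "T0 F (apx \<phi> n) - T0 F \<psi>"] by simp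
  also have "\<dots> \<le> ?L * (2 / real (Suc n)) + ?L * (1 / real (Suc n) + dnorm (\<lambda>g. \<phi> g - \<psi> g))"
    using Top_apx[OF F \<phi>, of n] T0_diff[OF F apx(1)[OF \<phi>] \<psi>, of n] mult_left_mono[OF d L]
    by linarith
  also have "\<dots> = ?L * dnorm (\<lambda>g. \<phi> g - \<psi> g) + 3 * ?L / real (Suc n)"
    by (rule arith3)
  finally show "norm (Top F \<phi> - T0 F \<psi>) \<le> ?L * dnorm (\<lambda>g. \<phi> g - \<psi> g) + 3 * ?L / real (Suc n)" .
qed

lemma Top_T0:
  fixes F :: "'a \<Rightarrow> 'b::banach"
  assumes F: "F \<in> lip0" and \<psi>: "\<psi> \<in> delta_span"
  shows "Top F \<psi> = T0 F \<psi>"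
proof -
  have "dnorm (\<lambda>g. \<psi> g - \<psi> g) \<le> 0" using dnorm_zero_fun by simp
  then have "norm (Top F \<psi> - T0 F \<psi>) \<le> 0"
    using Top_close[OF F delta_span_freesp[OF \<psi>] \<psi>] lipnorm_nonneg[OF F]
    by (meson mult_nonneg_nonpos order_trans)
  then show ?thesis by simp
qed

lemma Top_bound:
  fixes F :: "'a \<Rightarrow> 'b::banach"
  assumes F: "F \<in> lip0" and \<phi>: "\<phi> \<in> freesp"
  shows "norm (Top F \<phi>) \<le> lipnorm F * dnorm \<phi>"
proof -
  have z: "dfun {} (\<lambda>_. 0) \<in> delta_span" by (rule dfun_in_span) simp
  have "T0 F (dfun {} (\<lambda>_. 0)) = 0" using T0_eq[OF F, of "{}"] by simp
  moreover have "(\<lambda>g. \<phi> g - dfun {} (\<lambda>_. 0) g) = \<phi>" by (rule ext) (simp add: dfun_def)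
  ultimately show ?thesis using Top_close[OF F \<phi> z] by simp
qed

lemma Top_lin:
  fixes F :: "'a \<Rightarrow> 'b::banach"
  assumes F: "F \<in> lip0" and \<phi>: "\<phi> \<in> freesp" and \<psi>: "\<psi> \<in> freesp"
  shows "Top F (\<lambda>k. a * \<phi> k + b * \<psi> k) = a *\<^sub>R Top F \<phi> + b *\<^sub>R Top F \<psi>"
proof -
  let ?L = "lipnorm F"
  let ?\<chi> = "\<lambda>k. a * \<phi> k + b * \<psi> k"
  have L: "?L \<ge> 0" using lipnorm_nonneg[OF F] .
  have \<chi>: "?\<chi> \<in> freesp" by (rule freesp_comb[OF \<phi> \<psi>])
  have "norm (Top F ?\<chi> - (a *\<^sub>R Top F \<phi> + b *\<^sub>R Top F \<psi>)) \<le> 0"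
  proof (rule le_eps_lemma[where C = "3 * ?L * (\<bar>a\<bar> + \<bar>b\<bar>)"])
    fix n
    let ?p = "apx \<phi> n" and ?q = "apx \<psi> n"
    let ?c = "\<lambda>k. a * ?p k + b * ?q k"
    have pq: "?p \<in> delta_span" "?q \<in> delta_span" using apx(1) \<phi> \<psi> by auto
    have c: "?c \<in> delta_span" by (rule delta_span_comb[OF pq])
    have u1: "ubdd (\<lambda>g. \<phi> g - ?p g)" using dn_ubdd_diff freesp_ubdd[OF \<phi>] delta_span_ubdd[OF pq(1)] by blast
    have u2: "ubdd (\<lambda>g. \<psi> g - ?q g)" using dn_ubdd_diff freesp_ubdd[OF \<psi>] delta_span_ubdd[OF pq(2)] by blast
    have "dnorm (\<lambda>g. ?\<chi> g - ?c g) \<le> \<bar>a\<bar> * dnorm (\<lambda>g. \<phi> g - ?p g) + \<bar>b\<bar> * dnorm (\<lambda>g. \<psi> g - ?q g)"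
    proof (rule dnorm_dom[OF u1 u2])
      fix k :: "'a \<Rightarrow> real"
      have "\<bar>?\<chi> k - ?c k\<bar> = \<bar>a * (\<phi> k - ?p k) + b * (\<psi> k - ?q k)\<bar>" by (simp add: algebra_simps)
      also have "\<dots> \<le> \<bar>a\<bar> * \<bar>\<phi> k - ?p k\<bar> + \<bar>b\<bar> * \<bar>\<psi> k - ?q k\<bar>" by (metis abs_mult abs_triangle_ineq)
      finally show "\<bar>?\<chi> k - ?c k\<bar> \<le> \<bar>a\<bar> * \<bar>\<phi> k - ?p k\<bar> + \<bar>b\<bar> * \<bar>\<psi> k - ?q k\<bar>" .
    qed auto
    also have "\<dots> \<le> \<bar>a\<bar> * (1 / real (Suc n)) + \<bar>b\<bar> * (1 / real (Suc n))"
      using apx(2)[OF \<phi>, of n] apx(2)[OF \<psi>, of n] by (intro add_mono mult_left_mono) auto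
    also have "\<dots> = (\<bar>a\<bar> + \<bar>b\<bar>) / real (Suc n)" by (simp add: add_divide_distrib)
    finally have d: "dnorm (\<lambda>g. ?\<chi> g - ?c g) \<le> (\<bar>a\<bar> + \<bar>b\<bar>) / real (Suc n)" .
    have 1: "norm (Top F ?\<chi> - T0 F ?c) \<le> ?L * ((\<bar>a\<bar> + \<bar>b\<bar>) / real (Suc n))"
      using Top_close[OF F \<chi> c] mult_left_mono[OF d L] by linarith
    have Tc: "T0 F ?c = a *\<^sub>R T0 F ?p + b *\<^sub>R T0 F ?q" by (rule T0_lin[OF F pq])
    have "norm (T0 F ?c - (a *\<^sub>R Top F \<phi> + b *\<^sub>R Top F \<psi>)) = norm (a *\<^sub>R (T0 F ?p - Top F \<phi>) + b *\<^sub>R (T0 F ?q - Top F \<psi>))"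
      unfolding Tc by (simp add: algebra_simps)
    also have "\<dots> \<le> \<bar>a\<bar> * norm (T0 F ?p - Top F \<phi>) + \<bar>b\<bar> * norm (T0 F ?q - Top F \<psi>)"
      by (metis norm_scaleR norm_triangle_ineq)
    also have "\<dots> \<le> \<bar>a\<bar> * (?L * (2 / real (Suc n))) + \<bar>b\<bar> * (?L * (2 / real (Suc n)))"
      using Top_apx[OF F \<phi>, of n] Top_apx[OF F \<psi>, of n]
      by (intro add_mono mult_left_mono) (auto simp: norm_minus_commute)
    finally have 2: "norm (T0 F ?c - (a *\<^sub>R Top F \<phi> + b *\<^sub>R Top F \<psi>)) \<le> \<bar>a\<bar> * (?L * (2 / real (Suc n))) + \<bar>b\<bar> * (?L * (2 / real (Suc n)))" .
    have "norm (Top F ?\<chi> - (a *\<^sub>R Top F \<phi> + b *\<^sub>R Top F \<psi>)) \<le> norm (Top F ?\<chi> - T0 F ?c) + norm (T0 F ?c - (a *\<^sub>R Top F \<phi> + b *\<^sub>R Top F \<psi>))"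
      using dist_triangle[of "Top F ?\<chi>" "a *\<^sub>R Top F \<phi> + b *\<^sub>R Top F \<psi>" "T0 F ?c"] unfolding dist_norm .
    also have "\<dots> \<le> ?L * ((\<bar>a\<bar> + \<bar>b\<bar>) / real (Suc n)) + (\<bar>a\<bar> * (?L * (2 / real (Suc n))) + \<bar>b\<bar> * (?L * (2 / real (Suc n))))"
      using 1 2 by linarith
    also have "\<dots> = 0 + 3 * ?L * (\<bar>a\<bar> + \<bar>b\<bar>) / real (Suc n)" by (rule arith4)
    finally show "norm (Top F ?\<chi> - (a *\<^sub>R Top F \<phi> + b *\<^sub>R Top F \<psi>)) \<le> 0 + 3 * ?L * (\<bar>a\<bar> + \<bar>b\<bar>) / real (Suc n)" .
  qed
  then show ?thesis by simp
qed

lemma T0_mol: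
  fixes F :: "'a \<Rightarrow> 'b::real_normed_vector"
  assumes F: "F \<in> lip0" and pq: "p \<noteq> q"
  shows "T0 F (mol p q) = (F p - F q) /\<^sub>R norm (p - q)"
  unfolding mol_def using T0_eq[OF F, of "{p,q}"] pq
  by (simp add: scaleR_diff_right divide_inverse_commute[symmetric] scaleR_left_diff_distrib)
     (simp add: field_simps)

lemma dnorm_mol_le: "dnorm (mol (p::'a) q) \<le> 1"
proof (cases "p = q")
  case True
  then have "mol p q = (\<lambda>k. 0)" unfolding mol_def dfun_def by auto
  then show ?thesis using dnorm_zero_fun by simp
next
  case False
  show ?thesis
  proof (rule dnorm_le)
    fix k :: "'a \<Rightarrow> real" assume k: "k \<in> lip0" "lipnorm k \<le> 1"
    have "\<bar>mol p q k\<bar> = norm (k p - k q) / norm (p - q)" using k False by (simp add: mol_eq)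
    also have "\<dots> \<le> 1" using lipnorm_ge[OF k(1) False] k(2) by linarith
    finally show "\<bar>mol p q k\<bar> \<le> 1" .
  qed
qed

lemma dnorm_mol_ge:
  assumes pq: "(p::'a) \<noteq> q" shows "1 \<le> dnorm (mol p q)"
proof -
  define k where "k = (\<lambda>t::'a. norm (t - q) - norm q)"
  have kb: "norm (k a - k b) \<le> 1 * norm (a - b)" for a b
    unfolding k_def using norm_triangle_ineq3[of "a - q" "b - q"] by simp
  have kl: "k \<in> lip0" by (rule lip0I[OF _ kb]) (simp add: k_def)
  have kn: "lipnorm k \<le> 1" by (rule lipnorm_le) (use kb in \<open>simp add: divide_le_eq\<close>)
  have "mol p q k = 1" using pq kl by (simp add: mol_eq k_def)
  then show ?thesis using dnorm_ge[OF delta_span_ubdd[OF mol_in[of p q]] kl kn] by simp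
qed

end

lemma closed_of_compact_balls:
  fixes E :: "'b::real_normed_vector set"
  assumes "\<And>R. compact (E \<inter> cball 0 R)"
  shows "closed E"
proof -
  have "x \<in> E" if "x \<in> closure E" for x
  proof -
    have "\<exists>s. (\<forall>n. s n \<in> E) \<and> s \<longlonglongrightarrow> x" using that unfolding closure_sequential .
    then obtain s where s: "\<forall>n. s n \<in> E" "s \<longlonglongrightarrow> x" by blast
    have "(\<lambda>n. norm (s n)) \<longlonglongrightarrow> norm x" by (rule tendsto_norm[OF s(2)])
    then have "\<forall>\<^sub>F n in sequentially. norm (s n) < norm x + 1"
      by (rule order_tendstoD(2)) simp
    then have ev: "\<forall>\<^sub>F n in sequentially. s n \<in> E \<inter> cball 0 (norm x + 1)"
      by (rule eventually_mono) (use s(1) in auto)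
    have "x \<in> E \<inter> cball 0 (norm x + 1)"
      by (rule Lim_in_closed_set[OF compact_imp_closed[OF assms] ev _ s(2)]) simp
    then show ?thesis by simp
  qed
  then have "closure E \<subseteq> E" by blast
  then show ?thesis by (simp only: closure_subset_eq)
qed

lemma fd_compact:
  fixes Ys :: "'b::real_normed_vector set"
  assumes "finite Ys"
  shows "\<forall>R. compact (span Ys \<inter> cball 0 R)"
  using assms
proof (induction Ys rule: finite_induct)
  case empty
  show ?case
  proof
    fix R :: real
    have "finite (span ({}::'b set) \<inter> cball 0 R)" by (simp add: span_empty)
    then show "compact (span ({}::'b set) \<inter> cball 0 R)" by (rule finite_imp_compact)
  qed
next
  case (insert y Ys)
  have cl: "closed (span Ys)" by (rule closed_of_compact_balls) (use insert.IH in blast)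
  show ?case
  proof (cases "y \<in> span Ys")
    case True
    then show ?thesis using insert.IH span_redundant by metis
  next
    case False
    define d where "d = infdist y (span Ys)"
    have d: "d > 0" unfolding d_def using infdist_pos_not_in_closed[OF cl _ False] span_zero by blast
    show ?thesis
    proof
      fix R :: real
      define R' where "R' = R + (\<bar>R\<bar> / d) * norm y"
      define K where "K = (span Ys \<inter> cball 0 R') \<times> {-\<bar>R\<bar>/d .. \<bar>R\<bar>/d}"
      have cK: "compact K" unfolding K_def using insert.IH by (intro compact_Times) auto
      define f where "f = (\<lambda>z::'b \<times> real. fst z + snd z *\<^sub>R y)"
      have cf: "continuous_on K f" unfolding f_def by (intro continuous_intros)
      have cimg: "compact (f ` K)" by (rule compact_continuous_image[OF cf cK])
      have eq: "span (insert y Ys) \<inter> cball 0 R = f ` K \<inter> cball 0 R"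
      proof
        show "span (insert y Ys) \<inter> cball 0 R \<subseteq> f ` K \<inter> cball 0 R"
        proof
          fix z assume z: "z \<in> span (insert y Ys) \<inter> cball 0 R"
          then obtain t where t: "z - t *\<^sub>R y \<in> span Ys" unfolding span_insert by auto
          define e where "e = z - t *\<^sub>R y"
          have e: "e \<in> span Ys" using t e_def by simp
          have nz: "norm z \<le> R" using z by auto
          have tb: "\<bar>t\<bar> * d \<le> norm z"
          proof (cases "t = 0")
            case True then show ?thesis by simp
          next
            case False
            have "- (1/t) *\<^sub>R e \<in> span Ys" using e by (intro span_scale) 
            then have "d \<le> dist y (- (1/t) *\<^sub>R e)" unfolding d_def by (rule infdist_le)
            also have "dist y (- (1/t) *\<^sub>R e) = norm ((1/t) *\<^sub>R z)"
              unfolding dist_norm e_def using False by (simp add: algebra_simps)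
            also have "\<dots> = norm z / \<bar>t\<bar>" by simp
            finally show ?thesis using False by (simp add: field_simps)
          qed
          have tR: "\<bar>t\<bar> \<le> \<bar>R\<bar> / d" using tb nz d by (simp add: field_simps)
          have "norm e \<le> norm z + \<bar>t\<bar> * norm y" unfolding e_def
            using norm_triangle_ineq4[of z "t *\<^sub>R y"] by simp
          also have "\<dots> \<le> R + (\<bar>R\<bar> / d) * norm y" using nz tR by (intro add_mono mult_right_mono) auto
          finally have "norm e \<le> R'" unfolding R'_def .
          then have "(e, t) \<in> K" unfolding K_def using e tR by auto
          moreover have "z = f (e, t)" unfolding f_def e_def by simp
          ultimately show "z \<in> f ` K \<inter> cball 0 R" using z by auto
        qed
      next
        show "f ` K \<inter> cball 0 R \<subseteq> span (insert y Ys) \<inter> cball 0 R"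
        proof
          fix z assume "z \<in> f ` K \<inter> cball 0 R"
          then obtain e t where et: "(e,t) \<in> K" "z = e + t *\<^sub>R y" "z \<in> cball 0 R" unfolding f_def by auto
          have "e \<in> span (insert y Ys)" using et(1) unfolding K_def by (auto intro: span_mono[THEN subsetD, of Ys])
          moreover have "t *\<^sub>R y \<in> span (insert y Ys)" by (intro span_scale span_base) simp
          ultimately show "z \<in> span (insert y Ys) \<inter> cball 0 R" using et by (auto intro: span_add)
        qed
      qed
      show "compact (span (insert y Ys) \<inter> cball 0 R)" unfolding eq
        by (rule compact_Int_closed[OF cimg closed_cball])
    qed
  qed
qed

lemma infdist_scale_le:
  fixes E :: "'b::real_normed_vector set"
  assumes "subspace E"
  shows "infdist (c *\<^sub>R y) E \<le> \<bar>c\<bar> * infdist y E"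
proof (cases "c = 0")
  case True
  then show ?thesis using infdist_zero[OF subspace_0[OF assms]] by simp
next
  case False
  have ne: "E \<noteq> {}" using subspace_0[OF assms] by blast
  have "infdist (c *\<^sub>R y) E / \<bar>c\<bar> \<le> dist y e" if "e \<in> E" for e
  proof -
    have "c *\<^sub>R e \<in> E" using assms that by (rule subspace_scale)
    then have "infdist (c *\<^sub>R y) E \<le> dist (c *\<^sub>R y) (c *\<^sub>R e)" by (rule infdist_le)
    also have "\<dots> = \<bar>c\<bar> * dist y e" unfolding dist_norm by (simp flip: scaleR_diff_right)
    finally show ?thesis using False by (simp add: field_simps)
  qed
  then have "infdist (c *\<^sub>R y) E / \<bar>c\<bar> \<le> infdist y E"
    unfolding infdist_notempty[OF ne] using ne by (intro cINF_greatest) auto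
  then show ?thesis using False by (simp add: field_simps)
qed

lemma infdist_add_le:
  fixes E :: "'b::real_normed_vector set"
  assumes "subspace E"
  shows "infdist (y1 + y2) E \<le> infdist y1 E + infdist y2 E"
proof -
  have ne: "E \<noteq> {}" using subspace_0[OF assms] by blast
  have "infdist (y1 + y2) E - dist y2 e2 \<le> dist y1 e1" if "e1 \<in> E" "e2 \<in> E" for e1 e2
  proof -
    have "e1 + e2 \<in> E" using assms that by (rule subspace_add)
    then have "infdist (y1 + y2) E \<le> dist (y1 + y2) (e1 + e2)" by (rule infdist_le)
    also have "\<dots> \<le> dist y1 e1 + dist y2 e2" unfolding dist_norm
      using norm_triangle_ineq[of "y1 - e1" "y2 - e2"] by (simp add: algebra_simps)
    finally show ?thesis by simp
  qed
  then have "infdist (y1 + y2) E - dist y2 e2 \<le> infdist y1 E" if "e2 \<in> E" for e2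
    unfolding infdist_notempty[OF ne, of y1] using ne that by (intro cINF_greatest) auto
  then have "infdist (y1 + y2) E - infdist y1 E \<le> dist y2 e2" if "e2 \<in> E" for e2
    using that by force
  then have "infdist (y1 + y2) E - infdist y1 E \<le> infdist y2 E"
    unfolding infdist_notempty[OF ne, of y2] using ne by (intro cINF_greatest) auto
  then show ?thesis by simp
qed

lemma infdist_sublin:
  fixes E :: "'b::real_normed_vector set"
  assumes "subspace E"
  shows "sublin (\<lambda>y. infdist y E)"
proof
  fix x y :: 'b show "infdist (x + y) E \<le> infdist x E + infdist y E" by (rule infdist_add_le[OF assms])
next
  fix c :: real and x :: 'b assume c: "c \<ge> 0"
  show "infdist (c *\<^sub>R x) E = c * infdist x E"
  proof (cases "c = 0")
    case True then show ?thesis using infdist_zero[OF subspace_0[OF assms]] by simp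
  next
    case False
    have 1: "infdist (c *\<^sub>R x) E \<le> c * infdist x E" using infdist_scale_le[OF assms, of c x] c by simp
    have "infdist ((1/c) *\<^sub>R (c *\<^sub>R x)) E \<le> (1/c) * infdist (c *\<^sub>R x) E"
      using infdist_scale_le[OF assms, of "1/c" "c *\<^sub>R x"] c by simp
    then have "infdist x E \<le> (1/c) * infdist (c *\<^sub>R x) E" using False by simp
    then have 2: "c * infdist x E \<le> infdist (c *\<^sub>R x) E" using c False by (simp add: field_simps)
    show ?thesis using 1 2 by simp
  qed
qed

lemma infdist_neg:
  fixes E :: "'b::real_normed_vector set"
  assumes "subspace E"
  shows "infdist (- y) E = infdist y E"
  using infdist_scale_le[OF assms, of "-1" y] infdist_scale_le[OF assms, of "-1" "-y"] by simp

lemma infdist_lessE: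
  assumes "A \<noteq> {}" "infdist u A < d"
  obtains e where "e \<in> A" "dist u e < d"
proof -
  have "Inf (dist u ` A) < d" using assms infdist_notempty by metis
  then have "\<exists>x\<in>dist u ` A. x < d" using assms(1)
    by (subst (asm) cInf_less_iff) (auto intro: bdd_belowI[where m=0])
  then show ?thesis using that by blast
qed

lemma comb5:
  fixes a b c d x q s :: real
  shows "a \<le> b + c \<Longrightarrow> c \<le> d \<Longrightarrow> d \<le> 1 * s \<Longrightarrow> x \<le> q * (1 + s) \<Longrightarrow> b \<le> x \<Longrightarrow> a \<le> q + (q + 1) * s"
  by (simp add: algebra_simps)

context ntr
begin

lemma Top_compact:
  fixes F :: "'a \<Rightarrow> 'b::banach"
  assumes F: "F \<in> lip0" and L1: "lipnorm F \<le> 1" and K: "compact (closure (slopes F))"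
  shows "compact (closure (Top F ` {\<phi> \<in> freesp. dnorm \<phi> \<le> 1}))"
proof -
  let ?B = "{\<phi> \<in> freesp. dnorm \<phi> \<le> 1}"
  have L0: "lipnorm F \<ge> 0" by (rule lipnorm_nonneg[OF F])
  have F0: "F 0 = 0" using F unfolding lip0_def by auto
  have tb: "\<exists>k. finite k \<and> closure (Top F ` ?B) \<subseteq> (\<Union>x\<in>k. ball x \<epsilon>)" if e: "\<epsilon> > 0" for \<epsilon>
  proof -
    define r where "r = min \<epsilon> 1"
    have r: "r > 0" "r \<le> 1" "r \<le> \<epsilon>" unfolding r_def using e by auto
    obtain Ys where Ys: "finite Ys" "closure (slopes F) \<subseteq> (\<Union>y\<in>Ys. ball y (r/4))"
      using K r(1) unfolding compact_eq_totally_bounded by (metis divide_pos_pos zero_less_numeral)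
    define E where "E = span Ys"
    have sE: "subspace E" unfolding E_def by simp
    have Ene: "E \<noteq> {}" using sE subspace_0 by blast
    have slope_near: "infdist (F a - F b) E \<le> (r/4) * norm (a - b)" for a b
    proof (cases "a = b")
      case True then show ?thesis using infdist_zero[OF subspace_0[OF sE]] by simp
    next
      case False
      let ?s = "(F a - F b) /\<^sub>R norm (a - b)"
      have "?s \<in> slopes F" unfolding slopes_def using False by blast
      then have "?s \<in> closure (slopes F)" using closure_subset by blast
      then have "\<exists>y\<in>Ys. ?s \<in> ball y (r/4)" using Ys(2) by blast
      then obtain y where y: "y \<in> Ys" "dist ?s y < r/4" by (auto simp: dist_commute)
      have "y \<in> E" unfolding E_def using y(1) by (simp add: span_base)
      then have "infdist ?s E \<le> dist ?s y" by (rule infdist_le)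
      then have isd: "infdist ?s E \<le> r/4" using y(2) by linarith
      have ab: "F a - F b = norm (a - b) *\<^sub>R ?s" using False by simp
      have "infdist (norm (a - b) *\<^sub>R ?s) E = norm (a - b) * infdist ?s E"
        by (rule sublin.phom[OF infdist_sublin[OF sE]]) simp
      then have "infdist (F a - F b) E = norm (a - b) * infdist ?s E" using ab by simp
      also have "\<dots> \<le> norm (a - b) * (r/4)" using isd by (intro mult_left_mono) auto
      finally show ?thesis by (simp add: mult.commute)
    qed
    have T0near: "infdist (T0 F \<psi>) E \<le> (r/4) * dnorm \<psi>" if psi: "\<psi> \<in> delta_span" for \<psi>
    proof -
      obtain A c where A: "finite A" "\<psi> = dfun A c" using psi by (rule delta_spanE)
      have "infdist (\<Sum>x\<in>A. c x *\<^sub>R F x) E \<le> (r/4) * dnorm (dfun A c)"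
        by (rule KL[OF infdist_sublin[OF sE] infdist_neg[OF sE] F0 _ slope_near A(1)]) (use r in auto)
      then show ?thesis using T0_eq[OF F A(1)] A(2) by simp
    qed
    define Q where "Q = {u. infdist u E \<le> r/4 \<and> norm u \<le> 1}"
    have Qc: "closed Q" unfolding Q_def Collect_conj_eq
      by (intro closed_Int closed_Collect_le continuous_intros continuous_on_infdist) 
    have TQ: "Top F ` ?B \<subseteq> Q"
    proof
      fix u assume "u \<in> Top F ` ?B"
      then obtain \<phi> where \<phi>: "\<phi> \<in> freesp" "dnorm \<phi> \<le> 1" "u = Top F \<phi>" by blast
      have "lipnorm F * dnorm \<phi> \<le> 1 * 1" using \<phi>(2) L1 L0 dnorm_nonneg[OF freesp_ubdd[OF \<phi>(1)]]
        by (intro mult_mono) auto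
      then have "norm u \<le> 1" using Top_bound[OF F \<phi>(1)] \<phi>(3) by simp
      moreover have "infdist u E \<le> r/4"
      proof (rule le_eps_lemma[where C = "r/4 + 1"])
        fix n
        let ?p = "apx \<phi> n"
        have p: "?p \<in> delta_span" "dnorm (\<lambda>g. \<phi> g - ?p g) < 1 / real (Suc n)" using apx[OF \<phi>(1)] by auto
        have up: "ubdd ?p" "ubdd \<phi>" "ubdd (\<lambda>g. \<phi> g - ?p g)"
          using delta_span_ubdd[OF p(1)] freesp_ubdd[OF \<phi>(1)] dn_ubdd_diff by blast+
        have "dnorm ?p \<le> 1 * dnorm \<phi> + 1 * dnorm (\<lambda>g. \<phi> g - ?p g)"
          by (rule dnorm_dom[OF up(2) up(3)]) auto
        then have dp: "dnorm ?p \<le> 1 + 1 / real (Suc n)" using \<phi>(2) p(2) by simp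
        have a1: "infdist u E \<le> infdist (T0 F ?p) E + dist u (T0 F ?p)" by (rule infdist_triangle)
        have a2: "dist u (T0 F ?p) \<le> lipnorm F * dnorm (\<lambda>g. \<phi> g - ?p g)"
          unfolding \<phi>(3) dist_norm by (rule Top_close[OF F \<phi>(1) p(1)])
        have a3: "lipnorm F * dnorm (\<lambda>g. \<phi> g - ?p g) \<le> 1 * (1 / real (Suc n))" using L1 L0 p(2) dnorm_nonneg[OF up(3)]
          by (intro mult_mono) auto
        have a4: "(r/4) * dnorm ?p \<le> (r/4) * (1 + 1 / real (Suc n))" using dp r(1) by (intro mult_left_mono) auto
        have a5: "infdist (T0 F ?p) E \<le> (r/4) * dnorm ?p" by (rule T0near[OF p(1)])
        have "infdist u E \<le> r/4 + (r/4 + 1) * (1 / real (Suc n))"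
          by (rule comb5[OF a1 a2 a3 a4 a5])
        then show "infdist u E \<le> r/4 + (r/4 + 1) / real (Suc n)" by simp
      qed
      ultimately show "u \<in> Q" unfolding Q_def by simp
    qed
    have cl: "closure (Top F ` ?B) \<subseteq> Q" using closure_minimal[OF TQ Qc] .
    obtain k where k: "finite k" "E \<inter> cball 0 2 \<subseteq> (\<Union>x\<in>k. ball x (r/4))"
      using fd_compact[OF Ys(1)] r(1) unfolding compact_eq_totally_bounded E_def
      by (metis divide_pos_pos zero_less_numeral)
    have "Q \<subseteq> (\<Union>x\<in>k. ball x \<epsilon>)"
    proof
      fix u assume "u \<in> Q"
      then have u: "infdist u E \<le> r/4" "norm u \<le> 1" unfolding Q_def by auto
      have "infdist u E < r/2" using u r by simp
      then obtain e where e: "e \<in> E" "dist u e < r/2" using infdist_lessE[OF Ene] by blast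
      have "norm e \<le> norm u + dist u e" unfolding dist_norm using norm_triangle_ineq3[of e u]
        by (simp add: norm_minus_commute)
      then have "norm e \<le> 2" using u e r by simp
      then have "e \<in> E \<inter> cball 0 2" using e(1) by simp
      then have "\<exists>x\<in>k. e \<in> ball x (r/4)" using k(2) by blast
      then obtain x where x: "x \<in> k" "dist x e < r/4" by auto
      have "dist x u \<le> dist x e + dist e u" by (rule dist_triangle)
      then have "dist x u < \<epsilon>" using x e r by (simp add: dist_commute)
      then show "u \<in> (\<Union>x\<in>k. ball x \<epsilon>)" using x by auto
    qed
    then show ?thesis using k(1) cl by blast
  qed
  show ?thesis unfolding compact_eq_totally_bounded
    using tb by (simp add: complete_eq_closed)
qed

end

lemma final_arith:
  fixes \<tau> \<sigma> \<delta> \<gamma> m \<epsilon> N Mh D Gs Hs :: real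
  assumes tau: "\<tau> > 0" "2 * \<tau> \<le> \<sigma>" "\<tau> \<le> 1/2"
    and m: "m = min \<gamma> 1" and del: "\<delta> = \<tau> * m / 10" and g: "\<gamma> > 0" and e: "\<epsilon> < 1" "\<epsilon> > 0"
    and N: "N \<ge> 1 - \<delta>" "N \<le> D" and Mh: "Mh > 1 - \<epsilon> + \<gamma> - \<delta>" "Mh \<le> 2" "Mh \<ge> 0"
    and D: "D \<le> 1 + \<delta>"
    and Gs: "Gs \<le> 1" and Hs: "Hs \<le> 1"
    and main: "Gs + \<tau> * Hs > (N + \<tau> * Mh) / D - \<delta>"
  shows "Hs > 1 - \<epsilon>" "Gs > 1 - \<sigma>"
proof -
  have m01: "m > 0" "m \<le> 1" "m \<le> \<gamma>" using m g by auto
  have tm: "\<tau> * m > 0" "\<tau> * m \<le> \<tau>" using m01 tau by (auto simp: mult_left_le_one_le)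
  have d0: "\<delta> > 0" "\<delta> \<le> \<tau> / 10" using del tm by auto
  define X where "X = N + \<tau> * Mh"
  have Xpos: "X > 0"
  proof -
    have "\<tau> * Mh \<ge> 0" using Mh(3) tau by simp
    then show ?thesis unfolding X_def using N d0 tau by linarith
  qed
  have Dpos: "D > 0" using N d0 tau by linarith
  have "\<tau> * Mh \<le> \<tau> * 2" using Mh(2) tau by (intro mult_left_mono) auto
  then have X2: "X \<le> 2 + 2" unfolding X_def using N D d0 tau by linarith
  have "X / D \<ge> X / (1 + \<delta>)" using Xpos Dpos D by (intro divide_left_mono) auto
  moreover have "X / (1 + \<delta>) \<ge> X * (1 - \<delta>)"
  proof -
    have "X * (1 - \<delta>) * (1 + \<delta>) \<le> X" using Xpos d0 by (simp add: algebra_simps mult_nonneg_nonneg)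
    then show ?thesis using d0 by (simp add: field_simps)
  qed
  ultimately have XD: "X / D \<ge> X - X * \<delta>" by (simp add: algebra_simps)
  have "X * \<delta> \<le> 4 * \<delta>" using X2 d0 by (intro mult_right_mono) auto
  then have key: "Gs + \<tau> * Hs > X - 5 * \<delta>" using main XD unfolding X_def by linarith
  have "\<tau> * Mh \<ge> \<tau> * (1 - \<epsilon> + \<gamma> - \<delta>)" using Mh tau by (intro mult_left_mono) auto
  then have key2: "Gs + \<tau> * Hs > 1 + \<tau> * (1 - \<epsilon> + \<gamma>) - \<tau> * \<delta> - 6 * \<delta>"
    using key N unfolding X_def by (simp add: algebra_simps)
  have td: "\<tau> * \<delta> \<le> \<delta>" using tau d0 by (simp add: mult_left_le_one_le)
  have "\<tau> * m \<le> \<tau> * \<gamma>" using m01 tau by (intro mult_left_mono) auto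
  then have dm: "7 * \<delta> \<le> \<tau> * \<gamma> * 7 / 10" using del by (simp add: mult.commute)
  have "\<tau> * Hs > \<tau> * (1 - \<epsilon>)"
  proof -
    have "\<tau> * Hs > \<tau> * (1 - \<epsilon> + \<gamma>) - 7 * \<delta>" using key2 Gs td by linarith
    moreover have "\<tau> * (1 - \<epsilon> + \<gamma>) - 7 * \<delta> \<ge> \<tau> * (1 - \<epsilon>)" using dm tau g d0 by (simp add: algebra_simps)
    ultimately show ?thesis by linarith
  qed
  then show "Hs > 1 - \<epsilon>" using tau by simp
  have "\<tau> * Hs \<le> \<tau>" using Hs tau by simp
  then have "Gs > 1 + \<tau> * (1 - \<epsilon> + \<gamma>) - 7 * \<delta> - \<tau>" using key2 td by linarith
  moreover have "\<tau> * (1 - \<epsilon> + \<gamma>) - 7 * \<delta> \<ge> 0"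
  proof -
    have "\<tau> * (1 - \<epsilon>) \<ge> 0" "\<tau> * \<gamma> \<ge> 0" using tau e g by auto
    moreover have "\<tau> * (1 - \<epsilon> + \<gamma>) = \<tau> * (1 - \<epsilon>) + \<tau> * \<gamma>" by (simp add: algebra_simps)
    ultimately show ?thesis using dm by linarith
  qed
  ultimately show "Gs > 1 - \<sigma>" using tau by linarith
qed

definition dl :: "'a::real_normed_vector \<Rightarrow> ('a \<Rightarrow> real) \<Rightarrow> real" where
  "dl p = dfun {p} (\<lambda>_. 1)"

lemma dl_eq: "dl p = (\<lambda>k. if k \<in> lip0 then k p else 0)"
  unfolding dl_def dfun_def by (rule ext) simp

definition flinop :: "((('a::real_normed_vector \<Rightarrow> real) \<Rightarrow> real) \<Rightarrow> 'b::real_normed_vector) \<Rightarrow> bool" where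
  "flinop S \<longleftrightarrow> (\<forall>\<phi>\<in>freesp. \<forall>\<psi>\<in>freesp. \<forall>a b. S (\<lambda>g. a * \<phi> g + b * \<psi> g) = a *\<^sub>R S \<phi> + b *\<^sub>R S \<psi>)"

lemma cof_flinop: "compact_op_free S \<Longrightarrow> flinop S"
  unfolding compact_op_free_def flinop_def by blast

lemma op_le:
  assumes "bdd_above ((\<lambda>\<phi>. norm (S \<phi>)) ` {\<phi> \<in> freesp. dnorm \<phi> \<le> 1})" "\<phi> \<in> freesp" "dnorm \<phi> \<le> 1"
  shows "norm (S \<phi>) \<le> opnorm_free S"
  unfolding opnorm_free_def using assms by (intro cSUP_upper) auto

lemma op_bdd:
  assumes "compact_op_free S"
  shows "bdd_above ((\<lambda>\<phi>. norm (S \<phi>)) ` {\<phi> \<in> freesp. dnorm \<phi> \<le> 1})"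
proof -
  have "bounded (closure (S ` {\<phi> \<in> freesp. dnorm \<phi> \<le> 1}))"
    using assms unfolding compact_op_free_def by (auto intro: compact_imp_bounded)
  then have "bounded (S ` {\<phi> \<in> freesp. dnorm \<phi> \<le> 1})" using bounded_subset closure_subset by blast
  then obtain M where "\<forall>y\<in>S ` {\<phi> \<in> freesp. dnorm \<phi> \<le> 1}. norm y \<le> M" unfolding bounded_iff by blast
  then show ?thesis by (intro bdd_aboveI2[where M=M]) auto
qed

context ntr
begin

lemma dl_freesp: "dl p \<in> (freesp :: (('a \<Rightarrow> real) \<Rightarrow> real) set)"
  unfolding dl_def by (rule dfun_freesp) simp

lemma op_zero:
  fixes S :: "(('a \<Rightarrow> real) \<Rightarrow> real) \<Rightarrow> 'b::real_normed_vector"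
  assumes "flinop S" shows "S (\<lambda>k. 0) = 0"
proof -
  have "S (\<lambda>k. 0 * dl 0 k + 0 * dl 0 k) = 0 *\<^sub>R S (dl 0) + 0 *\<^sub>R S (dl 0)"
    using assms dl_freesp unfolding flinop_def by blast
  then show ?thesis by simp
qed

lemma op_dfun:
  fixes S :: "(('a \<Rightarrow> real) \<Rightarrow> real) \<Rightarrow> 'b::real_normed_vector"
  assumes S: "flinop S" and A: "finite A"
  shows "S (dfun A c) = (\<Sum>x\<in>A. c x *\<^sub>R S (dl x))"
  using A
proof (induction A rule: finite_induct)
  case empty
  have "dfun {} c = (\<lambda>k. 0)" unfolding dfun_def by (rule ext) simp
  then show ?case using op_zero[OF S] by simp
next
  case (insert a A)
  have eq: "dfun (insert a A) c = (\<lambda>k. 1 * dfun A c k + c a * dl a k)"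
    using insert(1,2) unfolding dfun_def dl_eq by (auto simp: sum.insert)
  have "S (\<lambda>k. 1 * dfun A c k + c a * dl a k) = 1 *\<^sub>R S (dfun A c) + c a *\<^sub>R S (dl a)"
    using S dfun_freesp[OF insert(1)] dl_freesp unfolding flinop_def by blast
  then show ?case unfolding eq using insert by (simp add: sum.insert)
qed

lemma op_mol:
  fixes S :: "(('a \<Rightarrow> real) \<Rightarrow> real) \<Rightarrow> 'b::real_normed_vector"
  assumes S: "flinop S" and pq: "p \<noteq> q"
  shows "S (mol p q) = (S (dl p) - S (dl q)) /\<^sub>R norm (p - q)"
proof -
  have eq: "mol p q = (\<lambda>k. (1 / norm (p - q)) * dl p k + (- 1 / norm (p - q)) * dl q k)"
    unfolding mol_eq[OF pq] dl_eq by (auto simp: diff_divide_distrib)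
  have "S (\<lambda>k. (1 / norm (p - q)) * dl p k + (- 1 / norm (p - q)) * dl q k) =
      (1 / norm (p - q)) *\<^sub>R S (dl p) + (- 1 / norm (p - q)) *\<^sub>R S (dl q)"
    using S dl_freesp unfolding flinop_def by blast
  then show ?thesis unfolding eq by (simp add: scaleR_diff_right divide_inverse)
qed

lemma op_bound:
  fixes S :: "(('a \<Rightarrow> real) \<Rightarrow> real) \<Rightarrow> 'b::real_normed_vector"
  assumes S: "flinop S" and bd: "bdd_above ((\<lambda>\<phi>. norm (S \<phi>)) ` {\<phi> \<in> freesp. dnorm \<phi> \<le> 1})"
    and \<phi>: "\<phi> \<in> freesp"
  shows "norm (S \<phi>) \<le> opnorm_free S * dnorm \<phi>"
proof (cases "dnorm \<phi> = 0")
  case True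
  have "\<phi> = (\<lambda>k. 0)"
  proof
    fix k :: "'a \<Rightarrow> real"
    show "\<phi> k = 0"
    proof (cases "k \<in> lip0")
      case True
      then show ?thesis using dnorm_lip[OF freesp_ubdd[OF \<phi>] freesp_flin[OF \<phi>] True] \<open>dnorm \<phi> = 0\<close> by simp
    next
      case False then show ?thesis using freesp_van[OF \<phi>] by simp
    qed
  qed
  then show ?thesis using op_zero[OF S] True by simp
next
  case False
  define d where "d = dnorm \<phi>"
  have d: "d > 0" using False dnorm_nonneg[OF freesp_ubdd[OF \<phi>]] d_def by simp
  define \<phi>' where "\<phi>' = (\<lambda>k. (1/d) * \<phi> k + 0 * \<phi> k)"
  have \<phi>'f: "\<phi>' \<in> freesp" unfolding \<phi>'_def by (rule freesp_comb[OF \<phi> \<phi>])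
  have "dnorm \<phi>' \<le> (1/d) * dnorm \<phi> + 0 * dnorm \<phi>"
    unfolding \<phi>'_def using freesp_ubdd[OF \<phi>] d by (intro dnorm_dom) (auto simp: abs_mult)
  then have "dnorm \<phi>' \<le> 1" using d d_def by simp
  then have "norm (S \<phi>') \<le> opnorm_free S" by (rule op_le[OF bd \<phi>'f])
  moreover have "S \<phi>' = (1/d) *\<^sub>R S \<phi> + 0 *\<^sub>R S \<phi>" unfolding \<phi>'_def using S \<phi> unfolding flinop_def by blast
  ultimately have "(1/d) * norm (S \<phi>) \<le> opnorm_free S" using d by simp
  then show ?thesis using d d_def by (simp add: field_simps)
qed

end

theorem lemma4p2:
  fixes eta :: "real \<Rightarrow> real"
    and f h :: "'a::banach \<Rightarrow> 'b::banach"
    and x y :: 'a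
    and \<epsilon> :: real
  assumes "bpbp_compact_free TYPE('a) TYPE('b) eta"
    and "0 < \<epsilon>" and "\<epsilon> < 1"
    and "f \<in> lip0K" and "lipnorm f = 1"
    and "x \<noteq> y"
    and "norm (f x - f y) / norm (x - y) > 1 - eta \<epsilon>"
    and "h \<in> lip0" and "lipnorm h = 1"
    and "norm (h x - h y) / norm (x - y) = 1"
  shows "\<exists>g z (v :: nat \<Rightarrow> 'a) w.
           g \<in> lip0K \<and> lipnorm g = 1 \<and> norm z = 1 \<and> (\<forall>n. v n \<noteq> w n)
           \<and> lipnorm (\<lambda>t. g t - f t) < \<epsilon>
           \<and> (\<forall>n. norm (h (v n) - h (w n)) / norm (v n - w n) > 1 - \<epsilon>)
           \<and> ((\<lambda>n. (g (v n) - g (w n)) /\<^sub>R norm (v n - w n)) \<longlonglongrightarrow> z)"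
proof -
  interpret ntr "x - y" using assms(6) by unfold_locales simp
  have fl: "f \<in> lip0" and fK: "compact (closure (slopes f))" using assms(4) unfolding lip0K_def by auto
  have hl: "h \<in> lip0" by (rule assms(8))
  define B where "B = {\<phi> \<in> (freesp :: (('a \<Rightarrow> real) \<Rightarrow> real) set). dnorm \<phi> \<le> 1}"
  define T where "T = (Top f :: (('a \<Rightarrow> real) \<Rightarrow> real) \<Rightarrow> 'b)"
  define w where "w = mol x y"
  have molB: "mol p q \<in> B" for p q
    unfolding B_def using delta_span_freesp[OF mol_in] dnorm_mol_le by blast
  have Bne: "B \<noteq> {}" using molB by blast
  have T_lin: "flinop T" unfolding flinop_def T_def using Top_lin[OF fl] by blast
  have T_cpt: "compact (closure (T ` B))" unfolding T_def B_def
    by (rule Top_compact[OF fl _ fK]) (simp add: assms(5))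
  have T_cof: "compact_op_free T" using T_lin T_cpt unfolding compact_op_free_def flinop_def B_def by blast
  have T_bdd: "bdd_above ((\<lambda>\<phi>. norm (T \<phi>)) ` B)" using op_bdd[OF T_cof] unfolding B_def .
  have T_mol: "T (mol p q) = (f p - f q) /\<^sub>R norm (p - q)" if "p \<noteq> q" for p q
    unfolding T_def using Top_T0[OF fl mol_in] T0_mol[OF fl that] by simp
  have T_norm: "opnorm_free T = 1"
  proof (rule antisym)
    show "opnorm_free T \<le> 1" unfolding opnorm_free_def B_def[symmetric]
    proof (rule cSUP_least[OF Bne])
      fix \<phi> assume "\<phi> \<in> B"
      then have \<phi>: "\<phi> \<in> freesp" "dnorm \<phi> \<le> 1" unfolding B_def by auto
      have "norm (T \<phi>) \<le> lipnorm f * dnorm \<phi>" unfolding T_def by (rule Top_bound[OF fl \<phi>(1)])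
      then show "norm (T \<phi>) \<le> 1" using \<phi>(2) assms(5) by simp
    qed
    show "1 \<le> opnorm_free T" unfolding assms(5)[symmetric]
    proof (rule lipnorm_le)
      fix p q :: 'a assume pq: "p \<noteq> q"
      have "norm (f p - f q) / norm (p - q) = norm (T (mol p q))" using T_mol[OF pq] by (simp add: divide_inverse_commute)
      also have "\<dots> \<le> opnorm_free T" using op_le[OF T_bdd[unfolded B_def]] molB[of p q] unfolding B_def by blast
      finally show "norm (f p - f q) / norm (p - q) \<le> opnorm_free T" .
    qed
  qed
  have wf: "w \<in> freesp" unfolding w_def by (rule delta_span_freesp[OF mol_in])
  have wn: "dnorm w = 1" unfolding w_def using dnorm_mol_le dnorm_mol_ge[OF assms(6)] by (simp add: antisym)
  have Tw: "norm (T w) > 1 - eta \<epsilon>" unfolding w_def T_mol[OF assms(6)] using assms(7)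
    by (simp add: divide_inverse_commute)
  have bp: "\<forall>\<epsilon>. 0 < \<epsilon> \<and> \<epsilon> < 1 \<longrightarrow>
       (\<forall>(T :: (('a \<Rightarrow> real) \<Rightarrow> real) \<Rightarrow> 'b) w.
          compact_op_free T \<and> opnorm_free T = 1 \<and> w \<in> freesp \<and> dnorm w = 1
          \<and> norm (T w) > 1 - eta \<epsilon> \<longrightarrow>
          (\<exists>(S :: (('a \<Rightarrow> real) \<Rightarrow> real) \<Rightarrow> 'b) v.
             compact_op_free S \<and> opnorm_free S = 1 \<and> v \<in> freesp \<and> dnorm v = 1
             \<and> norm (S v) = 1 \<and> opnorm_free (\<lambda>\<phi>. S \<phi> - T \<phi>) < \<epsilon>
             \<and> dnorm (\<lambda>g. v g - w g) < \<epsilon>))"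
    using assms(1) unfolding bpbp_compact_free_def by blast
  have "\<exists>(S :: (('a \<Rightarrow> real) \<Rightarrow> real) \<Rightarrow> 'b) v.
             compact_op_free S \<and> opnorm_free S = 1 \<and> v \<in> freesp \<and> dnorm v = 1
             \<and> norm (S v) = 1 \<and> opnorm_free (\<lambda>\<phi>. S \<phi> - T \<phi>) < \<epsilon>
             \<and> dnorm (\<lambda>g. v g - w g) < \<epsilon>"
    using bp[rule_format, OF conjI[OF assms(2) assms(3)], of T w] T_cof T_norm wf wn Tw by blast
  then obtain S :: "(('a \<Rightarrow> real) \<Rightarrow> real) \<Rightarrow> 'b" and v where
    S: "compact_op_free S" "opnorm_free S = 1" "v \<in> freesp" "dnorm v = 1" "norm (S v) = 1"
       "opnorm_free (\<lambda>\<phi>. S \<phi> - T \<phi>) < \<epsilon>" "dnorm (\<lambda>g. v g - w g) < \<epsilon>"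
    by blast
  have S_lin: "flinop S" by (rule cof_flinop[OF S(1)])
  have S_bdd: "bdd_above ((\<lambda>\<phi>. norm (S \<phi>)) ` B)" using op_bdd[OF S(1)] unfolding B_def .
  have S_cpt: "compact (closure (S ` B))" using S(1) unfolding compact_op_free_def B_def by blast
  define g where "g = (\<lambda>p. S (dl p))"
  have Smol: "S (mol p q) = (g p - g q) /\<^sub>R norm (p - q)" if "p \<noteq> q" for p q
    unfolding g_def by (rule op_mol[OF S_lin that])
  have SmolB: "norm (S (mol p q)) \<le> 1" for p q
    using op_le[OF S_bdd[unfolded B_def]] molB[of p q] S(2) unfolding B_def by auto
  have g0: "g 0 = 0"
  proof -
    have "dl (0::'a) = (\<lambda>k. 0)" unfolding dl_eq by (rule ext) (simp add: lip0_def)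
    then show ?thesis unfolding g_def using op_zero[OF S_lin] by simp
  qed
  have gb: "norm (g p - g q) \<le> 1 * norm (p - q)" for p q
  proof (cases "p = q")
    case True then show ?thesis by simp
  next
    case False
    have "norm (g p - g q) / norm (p - q) \<le> 1" using SmolB[of p q] Smol[OF False] by (simp add: divide_inverse_commute)
    then show ?thesis using False by (simp add: divide_le_eq)
  qed
  have gl: "g \<in> lip0" by (rule lip0I[OF g0 gb])
  have gn1: "lipnorm g \<le> 1" by (rule lipnorm_le) (use gb in \<open>simp add: divide_le_eq\<close>)
  have slg: "slopes g \<subseteq> S ` B"
  proof
    fix s assume "s \<in> slopes g"
    then obtain p q where "p \<noteq> q" "s = (g p - g q) /\<^sub>R norm (p - q)" unfolding slopes_def by blast
    then have "s = S (mol p q)" using Smol by simp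
    then show "s \<in> S ` B" using molB by blast
  qed
  have gK: "compact (closure (slopes g))"
  proof -
    have "closure (slopes g) \<subseteq> closure (S ` B)" using slg by (rule closure_mono)
    then have "closure (slopes g) = closure (S ` B) \<inter> closure (slopes g)" by blast
    then show ?thesis using compact_Int_closed[OF S_cpt closed_closure] by metis
  qed
  have g_in: "g \<in> lip0K" unfolding lip0K_def using gl gK by simp
  have gf: "lipnorm (\<lambda>t. g t - f t) < \<epsilon>"
  proof -
    let ?D = "\<lambda>\<phi>. S \<phi> - T \<phi>"
    obtain MS where MS: "\<And>\<phi>. \<phi> \<in> B \<Longrightarrow> norm (S \<phi>) \<le> MS" using S_bdd unfolding bdd_above_def by auto
    obtain MT where MT: "\<And>\<phi>. \<phi> \<in> B \<Longrightarrow> norm (T \<phi>) \<le> MT" using T_bdd unfolding bdd_above_def by auto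
    have D_bdd: "bdd_above ((\<lambda>\<phi>. norm (?D \<phi>)) ` B)"
    proof (rule bdd_aboveI2[where M = "MS + MT"])
      fix \<phi> assume "\<phi> \<in> B"
      then show "norm (?D \<phi>) \<le> MS + MT" using MS MT norm_triangle_ineq4[of "S \<phi>" "T \<phi>"] by fastforce
    qed
    have "lipnorm (\<lambda>t. g t - f t) \<le> opnorm_free ?D"
    proof (rule lipnorm_le)
      fix p q :: 'a assume pq: "p \<noteq> q"
      have "?D (mol p q) = ((g p - f p) - (g q - f q)) /\<^sub>R norm (p - q)"
        using Smol[OF pq] T_mol[OF pq] by (simp add: algebra_simps scaleR_diff_right)
      then have "norm ((g p - f p) - (g q - f q)) / norm (p - q) = norm (?D (mol p q))"
        by (simp add: divide_inverse_commute)
      also have "\<dots> \<le> opnorm_free ?D" using op_le[OF D_bdd[unfolded B_def]] molB[of p q] unfolding B_def by blast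
      finally show "norm ((g p - f p) - (g q - f q)) / norm (p - q) \<le> opnorm_free ?D" .
    qed
    then show ?thesis using S(6) by simp
  qed
  define \<gamma> where "\<gamma> = \<epsilon> - dnorm (\<lambda>g. v g - w g)"
  have \<gamma>: "\<gamma> > 0" unfolding \<gamma>_def using S(7) by simp
  have hw: "norm (T0 h w) = 1" unfolding w_def T0_mol[OF hl assms(6)] using assms(10)
    by (simp add: divide_inverse_commute)
  have ex: "\<exists>p q. p \<noteq> q \<and> norm ((g p - g q) /\<^sub>R norm (p - q)) > 1 - 1 / real (Suc n)
            \<and> norm (h p - h q) / norm (p - q) > 1 - \<epsilon>" for n
  proof -
    define \<sigma> where "\<sigma> = 1 / real (Suc n)"
    define \<tau> where "\<tau> = \<sigma> / 2"
    define m where "m = min \<gamma> 1"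
    define \<delta> where "\<delta> = \<tau> * m / 10"
    have \<sigma>: "\<sigma> > 0" "\<sigma> \<le> 1" unfolding \<sigma>_def by auto
    have \<tau>: "\<tau> > 0" "2 * \<tau> \<le> \<sigma>" "\<tau> \<le> 1/2" unfolding \<tau>_def using \<sigma> by auto
    have \<delta>: "\<delta> > 0" unfolding \<delta>_def m_def using \<tau> \<gamma> by auto
    have "\<tau> * m \<le> \<tau> * 1" unfolding m_def using \<tau> by (intro mult_left_mono) auto
    then have \<delta>s: "\<delta> \<le> 1/20" unfolding \<delta>_def using \<tau> by linarith
    obtain \<psi> where \<psi>: "\<psi> \<in> delta_span" "dnorm (\<lambda>g. v g - \<psi> g) < \<delta>" using S(3) \<delta> unfolding freesp_def by blast
    obtain A c where A: "finite A" "\<psi> = dfun A c" using \<psi>(1) by (rule delta_spanE)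
    have \<psi>f: "\<psi> \<in> freesp" by (rule delta_span_freesp[OF \<psi>(1)])
    have uv: "ubdd v" "ubdd \<psi>" "ubdd w" using freesp_ubdd S(3) \<psi>f wf by auto
    have dsym: "dnorm (\<lambda>g. \<psi> g - v g) = dnorm (\<lambda>g. v g - \<psi> g)" by (rule dn_sym[OF uv(1) uv(2)])
    define N where "N = norm (S \<psi>)"
    have "S (\<lambda>k. 1 * \<psi> k + (-1) * v k) = 1 *\<^sub>R S \<psi> + (-1) *\<^sub>R S v" using S_lin \<psi>f S(3) unfolding flinop_def by blast
    then have Sdiff: "S (\<lambda>k. \<psi> k - v k) = S \<psi> - S v" by simp
    have "norm (S (\<lambda>k. \<psi> k - v k)) \<le> opnorm_free S * dnorm (\<lambda>k. \<psi> k - v k)"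
      using op_bound[OF S_lin S_bdd[unfolded B_def]] freesp_comb[OF \<psi>f S(3), of 1 "-1"] by simp
    then have "norm (S \<psi> - S v) < \<delta>" using Sdiff S(2) dsym \<psi>(2) by simp
    then have N1: "N \<ge> 1 - \<delta>" unfolding N_def using S(5) norm_triangle_ineq3[of "S v" "S \<psi>"]
      by (simp add: norm_minus_commute)
    define D where "D = dnorm \<psi>"
    have "dnorm \<psi> \<le> 1 * dnorm v + 1 * dnorm (\<lambda>g. v g - \<psi> g)"
      by (rule dnorm_dom[OF uv(1) dn_ubdd_diff[OF uv(1) uv(2)]]) auto
    then have D1: "D \<le> 1 + \<delta>" unfolding D_def using S(4) \<psi>(2) by simp
    have ND: "N \<le> D" unfolding N_def D_def using op_bound[OF S_lin S_bdd[unfolded B_def] \<psi>f] S(2) by simp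
    define Mh where "Mh = norm (\<Sum>x\<in>A. c x *\<^sub>R h x)"
    have T0h: "T0 h \<psi> = (\<Sum>x\<in>A. c x *\<^sub>R h x)" unfolding A(2) by (rule T0_eq[OF hl A(1)])
    have "dnorm (\<lambda>g. \<psi> g - w g) \<le> dnorm (\<lambda>g. \<psi> g - v g) + dnorm (\<lambda>g. v g - w g)"
      by (rule dn_tri[OF uv(2) uv(1) uv(3)])
    then have dw: "dnorm (\<lambda>g. \<psi> g - w g) < \<delta> + (\<epsilon> - \<gamma>)" using dsym \<psi>(2) unfolding \<gamma>_def by simp
    have "norm (T0 h \<psi> - T0 h w) \<le> lipnorm h * dnorm (\<lambda>g. \<psi> g - w g)"
      by (rule T0_diff[OF hl \<psi>(1)]) (simp add: w_def mol_in)
    then have "norm (T0 h \<psi> - T0 h w) < \<delta> + (\<epsilon> - \<gamma>)" using dw assms(9) by simp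
    then have Mh1: "Mh > 1 - \<epsilon> + \<gamma> - \<delta>" unfolding Mh_def T0h[symmetric] using hw norm_triangle_ineq3[of "T0 h w" "T0 h \<psi>"]
      by (simp add: norm_minus_commute)
    have "Mh \<le> lipnorm h * dnorm \<psi>" unfolding Mh_def T0h[symmetric] by (rule T0_bound[OF hl \<psi>(1)])
    then have Mh2: "Mh \<le> 2" using D1 \<delta>s unfolding D_def assms(9) by simp
    have SA: "S \<psi> = (\<Sum>x\<in>A. c x *\<^sub>R g x)" unfolding A(2) g_def by (rule op_dfun[OF S_lin A(1)])
    obtain l1 where l1: "linear l1" "\<forall>y. \<bar>l1 y\<bar> \<le> norm y" "l1 (\<Sum>x\<in>A. c x *\<^sub>R g x) = norm (\<Sum>x\<in>A. c x *\<^sub>R g x)"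
      using hb_norming by blast
    obtain l2 where l2: "linear l2" "\<forall>y. \<bar>l2 y\<bar> \<le> norm y" "l2 (\<Sum>x\<in>A. c x *\<^sub>R h x) = norm (\<Sum>x\<in>A. c x *\<^sub>R h x)"
      using hb_norming by blast
    define K where "K = (\<lambda>t. l1 (g t) + \<tau> * l2 (h t))"
    have Kb0: "\<bar>K a - K b\<bar> \<le> norm (g a - g b) + \<tau> * norm (h a - h b)" for a b
    proof -
      have "K a - K b = l1 (g a - g b) + \<tau> * l2 (h a - h b)"
        unfolding K_def by (simp add: linear_diff[OF l1(1)] linear_diff[OF l2(1)] algebra_simps)
      moreover have "\<bar>\<tau> * l2 (h a - h b)\<bar> = \<tau> * \<bar>l2 (h a - h b)\<bar>" using \<tau> by (simp add: abs_mult)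
      ultimately have "\<bar>K a - K b\<bar> \<le> \<bar>l1 (g a - g b)\<bar> + \<tau> * \<bar>l2 (h a - h b)\<bar>"
        using abs_triangle_ineq[of "l1 (g a - g b)" "\<tau> * l2 (h a - h b)"] by simp
      also have "\<dots> \<le> norm (g a - g b) + \<tau> * norm (h a - h b)"
        using l1(2) l2(2) \<tau> by (intro add_mono mult_left_mono) auto
      finally show ?thesis .
    qed
    have Kb: "norm (K a - K b) \<le> (1 + \<tau>) * norm (a - b)" for a b
    proof -
      have "norm (h a - h b) \<le> 1 * norm (a - b)" using lip_ineq[OF hl, of a b] assms(9) by simp
      then have "\<tau> * norm (h a - h b) \<le> \<tau> * norm (a - b)" using \<tau> by (intro mult_left_mono) auto
      then show ?thesis using Kb0[of a b] gb[of a b] by (simp add: algebra_simps)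
    qed
    have K0: "K 0 = 0" unfolding K_def using g0 hl linear_0[OF l1(1)] linear_0[OF l2(1)] by (simp add: lip0_def)
    have Kl: "K \<in> lip0" by (rule lip0I[OF K0 Kb])
    have "dfun A c K = (\<Sum>x\<in>A. c x * (l1 (g x) + \<tau> * l2 (h x)))" unfolding dfun_def K_def using Kl K_def by simp
    also have "\<dots> = l1 (\<Sum>x\<in>A. c x *\<^sub>R g x) + \<tau> * l2 (\<Sum>x\<in>A. c x *\<^sub>R h x)"
      by (simp add: linear_sum[OF l1(1)] linear_scale[OF l1(1)] linear_sum[OF l2(1)] linear_scale[OF l2(1)]
          sum.distrib sum_distrib_left algebra_simps)
    finally have dK: "dfun A c K = N + \<tau> * Mh" unfolding N_def Mh_def SA using l1(3) l2(3) by simp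
    have "\<bar>dfun A c K\<bar> \<le> dnorm (dfun A c) * lipnorm K" by (rule dnorm_lip[OF dfun_ubdd[OF A(1)] dfun_flin Kl])
    then have NK: "N + \<tau> * Mh \<le> D * lipnorm K" unfolding dK D_def A(2) by simp
    have Dpos: "D > 0" using N1 ND \<delta>s by linarith
    have "(N + \<tau> * Mh) / D \<le> lipnorm K" using NK Dpos by (simp add: divide_le_eq mult.commute)
    then have "(N + \<tau> * Mh) / D - \<delta> < lipnorm K" using \<delta> by linarith
    then obtain pr where pr: "pr \<in> offdiag" "(N + \<tau> * Mh) / D - \<delta> < norm (K (fst pr) - K (snd pr)) / norm (fst pr - snd pr)"
      unfolding lipnorm_def using less_cSUP_iff[OF offdiag_ne lipnorm_bdd[OF Kl]] by blast
    define p where "p = fst pr"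
    define q where "q = snd pr"
    have pq: "p \<noteq> q" using pr(1) unfolding p_def q_def offdiag_def by auto
    have npq: "norm (p - q) > 0" using pq by simp
    define Gs where "Gs = norm (g p - g q) / norm (p - q)"
    define Hs where "Hs = norm (h p - h q) / norm (p - q)"
    have "norm (K p - K q) / norm (p - q) \<le> (norm (g p - g q) + \<tau> * norm (h p - h q)) / norm (p - q)"
      using Kb0[of p q] npq by (intro divide_right_mono) auto
    also have "\<dots> = Gs + \<tau> * Hs" unfolding Gs_def Hs_def by (simp add: add_divide_distrib)
    finally have main: "Gs + \<tau> * Hs > (N + \<tau> * Mh) / D - \<delta>" using pr(2) unfolding p_def q_def by linarith
    have Gs1: "Gs \<le> 1" unfolding Gs_def using gb[of p q] npq by (simp add: divide_le_eq)
    have Hs1: "Hs \<le> 1" unfolding Hs_def using lipnorm_ge[OF hl pq] assms(9) by simp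
    have Mh0: "Mh \<ge> 0" unfolding Mh_def by simp
    have res: "Hs > 1 - \<epsilon>" "Gs > 1 - \<sigma>"
      using final_arith[OF \<tau> m_def \<delta>_def \<gamma> assms(3) assms(2) N1 ND Mh1 Mh2 Mh0 D1 Gs1 Hs1 main] by auto
    have "norm ((g p - g q) /\<^sub>R norm (p - q)) = Gs" unfolding Gs_def by (simp add: divide_inverse_commute)
    then show ?thesis using pq res unfolding Hs_def \<sigma>_def by blast
  qed
  then obtain PQ where PQ: "\<forall>n. fst (PQ n) \<noteq> snd (PQ n) \<and>
      norm ((g (fst (PQ n)) - g (snd (PQ n))) /\<^sub>R norm (fst (PQ n) - snd (PQ n))) > 1 - 1 / real (Suc n)
      \<and> norm (h (fst (PQ n)) - h (snd (PQ n))) / norm (fst (PQ n) - snd (PQ n)) > 1 - \<epsilon>"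
    using choice[of "\<lambda>n pq. fst pq \<noteq> snd pq \<and>
      norm ((g (fst pq) - g (snd pq)) /\<^sub>R norm (fst pq - snd pq)) > 1 - 1 / real (Suc n)
      \<and> norm (h (fst pq) - h (snd pq)) / norm (fst pq - snd pq) > 1 - \<epsilon>"] by force
  define P where "P = (\<lambda>n. fst (PQ n))"
  define Q where "Q = (\<lambda>n. snd (PQ n))"
  define gs where "gs = (\<lambda>n. (g (P n) - g (Q n)) /\<^sub>R norm (P n - Q n))"
  have gsS: "gs n \<in> closure (S ` B)" for n
  proof -
    have pq: "P n \<noteq> Q n" using PQ unfolding P_def Q_def by blast
    have "gs n = S (mol (P n) (Q n))" unfolding gs_def by (rule Smol[OF pq, symmetric])
    then have "gs n \<in> S ` B" by (rule image_eqI[OF _ molB])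
    then show ?thesis by (rule closure_subset[THEN subsetD])
  qed
  obtain z r where zr: "z \<in> closure (S ` B)" "strict_mono r" "(gs \<circ> r) \<longlonglongrightarrow> z"
    using seq_compactE[OF compact_imp_seq_compact[OF S_cpt]] gsS by metis
  have gs1: "norm (gs n) \<le> 1" for n
  proof (cases "P n = Q n")
    case True then show ?thesis unfolding gs_def by simp
  next
    case False
    have "norm (gs n) = norm (g (P n) - g (Q n)) / norm (P n - Q n)" unfolding gs_def by (simp add: divide_inverse_commute)
    also have "\<dots> \<le> 1" using gb[of "P n" "Q n"] False by (simp add: divide_le_eq)
    finally show ?thesis .
  qed
  have gsn: "norm (gs n) > 1 - 1 / real (Suc n)" for n unfolding gs_def P_def Q_def using PQ by blast
  have nz: "(\<lambda>n. norm ((gs \<circ> r) n)) \<longlonglongrightarrow> norm z" by (rule tendsto_norm[OF zr(3)])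
  have z1: "norm z \<le> 1" by (rule LIMSEQ_le_const2[OF nz]) (use gs1 in auto)
  have z2: "1 \<le> norm z"
  proof (rule le_eps_lemma[where C=1])
    fix k
    have "1 - 1 / real (Suc k) \<le> norm z"
    proof (rule LIMSEQ_le_const[OF nz], intro exI allI impI)
      fix n assume "n \<ge> k"
      then have "r n \<ge> k" using seq_suble[OF zr(2), of n] by linarith
      then have "1 / real (Suc (r n)) \<le> 1 / real (Suc k)" by (intro divide_left_mono) auto
      then show "1 - 1 / real (Suc k) \<le> norm ((gs \<circ> r) n)" using gsn[of "r n"] by simp
    qed
    then show "1 \<le> norm z + 1 / real (Suc k)" by simp
  qed
  have gn: "lipnorm g = 1"
  proof (rule antisym[OF gn1])
    show "1 \<le> lipnorm g"
    proof (rule le_eps_lemma[where C=1])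
      fix n
      have pq: "P n \<noteq> Q n" using PQ P_def Q_def by blast
      have "norm (gs n) = norm (g (P n) - g (Q n)) / norm (P n - Q n)" unfolding gs_def by (simp add: divide_inverse_commute)
      then have "norm (gs n) \<le> lipnorm g" using lipnorm_ge[OF gl pq] by simp
      then show "1 \<le> lipnorm g + 1 / real (Suc n)" using gsn[of n] by simp
    qed
  qed
  show ?thesis
  proof (intro exI conjI)
    show "g \<in> lip0K" by (rule g_in)
    show "lipnorm g = 1" by (rule gn)
    show "norm z = 1" using z1 z2 by simp
    show "\<forall>n. (P \<circ> r) n \<noteq> (Q \<circ> r) n" using PQ P_def Q_def by simp
    show "lipnorm (\<lambda>t. g t - f t) < \<epsilon>" by (rule gf)
    show "\<forall>n. norm (h ((P \<circ> r) n) - h ((Q \<circ> r) n)) / norm ((P \<circ> r) n - (Q \<circ> r) n) > 1 - \<epsilon>"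
      using PQ P_def Q_def by simp
    show "(\<lambda>n. (g ((P \<circ> r) n) - g ((Q \<circ> r) n)) /\<^sub>R norm ((P \<circ> r) n - (Q \<circ> r) n)) \<longlonglongrightarrow> z"
      using zr(3) unfolding gs_def comp_def .
  qed
qed

end
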